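(* (1) For $k\ge1$, $\lambda\in\mathcal S_k$, $\mu\in\mathcal S_{k-1}$ and $a>0$, $$\sum_{l=1}^k(1-q^{\lambda_{l-1}-\lambda_l})P_{(\lambda+1_l)/\mu}(a)=a\,P_{\lambda/\mu}(a)+\sum_{l=1}^{k-1}(1-q^{\mu_{l-1}-\mu_l+1})P_{\lambda/(\mu-1_l)}(a),$$ with the conventions $\lambda_0=\mu_0=+\infty$. (2) For $\lambda\in\mathcal S_k$, $\alpha\in[0,1)^k$ and $t>0$, $$\frac{\partial}{\partial t}Q_\lambda(\alpha,t)=\sum_{l=1}^k(1-q^{\lambda_{l-1}-\lambda_l+1})Q_{\lambda-1_l}(\alpha,t),$$ with $\lambda_0=+\infty$.
   Context: Fix $0<q<1$; $(x;q)_\infty=\prod_{k\ge0}(1-xq^k)$, $(x;q)_n=(x;q)_\infty/(xq^n;q)_\infty$ ($1/(q;q)_n=0$ for $n<0$). $\mathcal S_n=\{\lambda\in\mathbb Z^n:\lambda_1\ge\dots\ge\lambda_n\}$. $1_l$ denotes the $l$-th unit vector, so $\lambda\pm1_l$ changes $\lambda_l$ by $\pm1$. For integer tuples $\lambda\in\mathbb Z^n$, $\mu\in\mathbb Z^{n-1}$, $P_{\lambda/\mu}(a)=a^{\sum_i\lambda_i-\sum_i\mu_i}\prod_{i=1}^{n-1}\frac{(q;q)_{\lambda_i-\lambda_{i+1}}}{(q;q)_{\lambda_i-\mu_i}(q;q)_{\mu_i-\lambda_{i+1}}}$ (with $P_{\lambda/\varnothing}(a)=a^{\lambda_1}$). $P_\lambda(x_1,\dots,x_N)=\sum\prod_jP_{\lambda^{(j)}/\lambda^{(j-1)}}(x_j)$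 over $(\lambda^{(1)},\dots,\lambda^{(N)})$, $\lambda^{(n)}\in\mathcal S_n$, interlacing $\lambda^{(m+1)}_{\ell+1}\le\lambda^{(m)}_\ell\le\lambda^{(m+1)}_\ell$, $\lambda^{(N)}=\lambda$. $m_N^q(z)=\frac{1}{(2\pi i)^NN!}\prod_{i<j}(z_i/z_j;q)_\infty(z_j/z_i;q)_\infty$, $\Pi(z;\alpha,t)=\prod_{i,j}(\alpha_i/z_j;q)_\infty^{-1}\prod_je^{z_jt}$, $Q_\lambda(\alpha,t)=\prod_{i=1}^{N-1}(q^{\lambda_i-\lambda_{i+1}+1};q)_\infty\int_{\mathbb T^N}\prod_i\frac{dz_i}{z_i}P_\lambda(1/z)\Pi(z;\alpha,t)m_N^q(z)$ ($\mathbb T$ unit circle) for $\lambda\in\mathcal S_N$, and $Q_\nu:=0$ if $\nu$ is not a signature. *)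

theory Defs
  imports "HOL-Analysis.Analysis"
begin

definition qpinf :: "real \<Rightarrow> 'a::{real_normed_field,banach} \<Rightarrow> 'a" where
  "qpinf q x = prodinf (\<lambda>k. 1 - x * of_real q ^ k)"

definition qpoch :: "real \<Rightarrow> real \<Rightarrow> int \<Rightarrow> real" where
  "qpoch q x n = qpinf q x / qpinf q (x * q powi n)"

definition qqinv :: "real \<Rightarrow> int \<Rightarrow> real" where
  "qqinv q n = (if n < 0 then 0 else 1 / qpoch q q n)"

text \<open>Signatures: an integer tuple lambda_1 \<ge> ... \<ge> lambda_n, stored as a list
  (lambda_i = lam ! (i-1)).\<close>
definition is_sig :: "int list \<Rightarrow> bool" where
  "is_sig lam = sorted_wrt (\<lambda>x y. x \<ge> y) lam"

text \<open>Skew function P_{lambda/mu}(a), for lambda of length n and mu of length n-1.\<close>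
definition Pskew :: "real \<Rightarrow> int list \<Rightarrow> int list \<Rightarrow> 'a::{real_normed_field,banach} \<Rightarrow> 'a" where
  "Pskew q lam mu a = a powi (sum_list lam - sum_list mu) *
     of_real (\<Prod>i<length lam - 1.
        qpoch q q (lam!i - lam!(i+1)) * qqinv q (lam!i - mu!i) * qqinv q (mu!i - lam!(i+1)))"

definition interlace :: "int list \<Rightarrow> int list \<Rightarrow> bool" where
  "interlace mu lam = (length lam = length mu + 1 \<and>
     (\<forall>l<length mu. lam!(l+1) \<le> mu!l \<and> mu!l \<le> lam!l))"

text \<open>Gelfand-Tsetlin patterns (lambda^(1),...,lambda^(N)) with lambda^(N) = lam;
  T ! j stands for lambda^(j+1).\<close>
definition GT :: "nat \<Rightarrow> int list \<Rightarrow> int list list set" where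
  "GT N lam = {T. length T = N \<and>
     (\<forall>j<N. length (T!j) = j+1 \<and> is_sig (T!j)) \<and>
     (\<forall>j. j+1 < N \<longrightarrow> interlace (T!j) (T!(j+1))) \<and>
     (if N = 0 then lam = [] else T!(N-1) = lam)}"

text \<open>P_lambda(x_1,...,x_N) with N = length lam; x_j is given as x (j-1).\<close>
definition Pfun :: "real \<Rightarrow> int list \<Rightarrow> (nat \<Rightarrow> 'a::{real_normed_field,banach}) \<Rightarrow> 'a" where
  "Pfun q lam x = (\<Sum>T\<in>GT (length lam) lam.
      \<Prod>j<length lam. Pskew q (T!j) (if j = 0 then [] else T!(j-1)) (x j))"

definition mq :: "real \<Rightarrow> nat \<Rightarrow> (nat \<Rightarrow> complex) \<Rightarrow> complex" where
  "mq q N z = 1 / ((2 * of_real pi * \<i>) ^ N * of_nat (fact N)) *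
     (\<Prod>i<N. \<Prod>j\<in>{i+1..<N}. qpinf q (z i / z j) * qpinf q (z j / z i))"

definition PiF :: "real \<Rightarrow> nat \<Rightarrow> (nat \<Rightarrow> complex) \<Rightarrow> (nat \<Rightarrow> real) \<Rightarrow> real \<Rightarrow> complex" where
  "PiF q N z alpha t = (\<Prod>i<N. \<Prod>j<N. inverse (qpinf q (of_real (alpha i) / z j))) *
     (\<Prod>j<N. exp (z j * of_real t))"

text \<open>Integral over the torus T^N of prod_i dz_i/z_i f(z), via z_j = exp(i theta_j),
  theta_j in [0, 2 pi], so that dz_j/z_j = i d theta_j.\<close>
definition torus_int :: "nat \<Rightarrow> ((nat \<Rightarrow> complex) \<Rightarrow> complex) \<Rightarrow> complex" where
  "torus_int N f = \<i> ^ N *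
     (\<integral>\<theta>. f (\<lambda>j. exp (\<i> * of_real (\<theta> j)))
        \<partial>(Pi\<^sub>M {..<N} (\<lambda>_. restrict_space lborel {0..2*pi})))"

definition Qfun :: "real \<Rightarrow> int list \<Rightarrow> (nat \<Rightarrow> real) \<Rightarrow> real \<Rightarrow> complex" where
  "Qfun q lam alpha t = (if \<not> is_sig lam then 0 else
     of_real (\<Prod>i<length lam - 1. qpinf q (q powi (lam!i - lam!(i+1) + 1))) *
     torus_int (length lam) (\<lambda>z. Pfun q lam (\<lambda>j. 1 / z j) * PiF q (length lam) z alpha t
                                   * mq q (length lam) z))"

end

theory Submission
  imports Defs
begin


lemma qpinf_conv:
  fixes x :: "'a::{real_normed_field,banach}"
  assumes "\<bar>q\<bar> < 1"
  shows "convergent_prod (\<lambda>k. 1 - x * of_real q ^ k)"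
proof -
  have "summable (\<lambda>k. norm x * \<bar>q\<bar> ^ k)"
    using assms by (intro summable_mult summable_geometric) simp
  then have "summable (\<lambda>k. norm ((1 - x * of_real q ^ k) - 1))"
    by (simp add: norm_mult norm_power)
  then show ?thesis
    by (intro abs_convergent_prod_imp_convergent_prod summable_imp_abs_convergent_prod)
qed

lemma qpinf_LIMSEQ:
  fixes x :: "'a::{real_normed_field,banach}"
  assumes "\<bar>q\<bar> < 1"
  shows "(\<lambda>n. \<Prod>k\<le>n. 1 - x * of_real q ^ k) \<longlonglongrightarrow> qpinf q x"
  unfolding qpinf_def by (rule convergent_prod_LIMSEQ[OF qpinf_conv[OF assms]])

lemma qpinf_shift:
  fixes x :: "'a::{real_normed_field,banach}"
  assumes "\<bar>q\<bar> < 1"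
  shows "qpinf q x = (1 - x) * qpinf q (x * of_real q)"
proof -
  have "(\<lambda>k. 1 - (x * of_real q) * of_real q ^ k) has_prod qpinf q (x * of_real q)"
    unfolding qpinf_def by (rule convergent_prod_has_prod[OF qpinf_conv[OF assms]])
  then have "(\<lambda>n. (\<lambda>k. 1 - x * of_real q ^ k) (Suc n)) has_prod qpinf q (x * of_real q)"
    by (simp add: mult.assoc mult.commute)
  from has_prod_Suc_imp[OF this]
  have "(\<lambda>k. 1 - x * of_real q ^ k) has_prod (qpinf q (x * of_real q) * (1 - x))" by simp
  then show ?thesis unfolding qpinf_def
    by (simp add: has_prod_iff mult.commute)
qed

lemma qpinf_real_pos:
  fixes q x :: real
  assumes "0 < q" "q < 1" "0 \<le> x" "x < 1"
  shows "qpinf q x > 0"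
proof -
  have cp: "convergent_prod (\<lambda>k. 1 - x * q ^ k)" using qpinf_conv[of q x] assms by simp
  have fpos: "\<And>k. 1 - x * q ^ k > 0"
  proof -
    fix k :: nat
    have "q ^ k \<le> 1" using assms by (simp add: power_le_one)
    then have "x * q ^ k \<le> x" using assms by (simp add: mult_left_le)
    then show "1 - x * q ^ k > 0" using assms by simp
  qed
  have "prodinf (\<lambda>k. 1 - x * q ^ k) \<noteq> 0"
    by (rule prodinf_nonzero[OF cp]) (metis fpos less_irrefl)
  then have nz: "qpinf q x \<noteq> 0" by (simp add: qpinf_def)
  have "(\<lambda>n. \<Prod>k\<le>n. 1 - x * of_real q ^ k) \<longlonglongrightarrow> qpinf q x"
    using qpinf_LIMSEQ[of q x] assms by simp
  moreover have "\<forall>n. (\<Prod>k\<le>n. 1 - x * of_real q ^ k) \<ge> (0::real)"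
  proof
    fix n show "(\<Prod>k\<le>n. 1 - x * of_real q ^ k) \<ge> (0::real)"
      by (rule prod_nonneg) (use fpos in \<open>simp add: less_imp_le\<close>)
  qed
  ultimately have "qpinf q x \<ge> 0"
    by (intro LIMSEQ_le_const) auto
  with nz show ?thesis by simp
qed

definition qp :: "real \<Rightarrow> nat \<Rightarrow> real" where
  "qp q n = qpoch q q (int n)"

lemma qp_0: assumes "0 < q" "q < 1" shows "qp q 0 = 1"
proof -
  have "qpinf q q > 0" using qpinf_real_pos[of q q] assms by simp
  then show ?thesis unfolding qp_def qpoch_def by simp
qed

lemma qp_Suc: assumes "0 < q" "q < 1" shows "qp q (Suc n) = qp q n * (1 - q ^ Suc n)"
proof -
  have e1: "q * q powi int n = q ^ Suc n" unfolding power_int_of_nat by simp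
  have e2: "q * q powi int (Suc n) = q ^ Suc n * q" unfolding power_int_of_nat by simp
  have sh: "qpinf q (q ^ Suc n) = (1 - q ^ Suc n) * qpinf q (q ^ Suc n * q)"
    using qpinf_shift[of q "q ^ Suc n"] assms by simp
  have pos: "qpinf q (q ^ Suc n * q) > 0"
    using qpinf_real_pos[of q "q ^ Suc n * q"] assms power_Suc_less_one[of q "Suc n"]
    by (simp add: mult.commute)
  have "1 - q ^ Suc n > 0" using power_Suc_less_one[OF assms(1,2), of n] by simp
  then show ?thesis unfolding qp_def qpoch_def e1 e2 sh using pos by (simp add: field_simps)
qed

lemma qp_pos: assumes "0 < q" "q < 1" shows "qp q n > 0"
proof (induction n)
  case 0 then show ?case using qp_0[OF assms] by simp
next
  case (Suc n)
  have "1 - q ^ Suc n > 0" using power_Suc_less_one[OF assms(1,2), of n] by simp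
  then show ?case using Suc qp_Suc[OF assms] by simp
qed

lemma qp_nz: assumes "0 < q" "q < 1" shows "qp q n \<noteq> 0"
  using qp_pos[OF assms, of n] by simp

definition gq :: "real \<Rightarrow> int \<Rightarrow> int \<Rightarrow> real" where
  "gq q A B = qpoch q q (A + B) * qqinv q A * qqinv q B"

lemma gq_neg1: "A < 0 \<Longrightarrow> gq q A B = 0" by (simp add: gq_def qqinv_def)
lemma gq_neg2: "B < 0 \<Longrightarrow> gq q A B = 0" by (simp add: gq_def qqinv_def)
lemma gq_sym: "gq q A B = gq q B A" by (simp add: gq_def add.commute)

lemma gq_nat: "gq q (int a) (int b) = qp q (a + b) / (qp q a * qp q b)"
  by (simp add: gq_def qqinv_def qp_def)

lemma K1:
  assumes "0 < q" "q < 1"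
  shows "(1 - q powi (A + B)) * gq q A (B - 1) = (1 - q powi B) * gq q A B"
proof (cases "A < 0 \<or> B < 1")
  case True
  then show ?thesis
  proof
    assume "A < 0" then show ?thesis by (simp add: gq_neg1)
  next
    assume "B < 1"
    then consider "B < 0" | "B = 0" by linarith
    then show ?thesis by cases (simp_all add: gq_neg2)
  qed
next
  case False
  then have "A \<ge> 0" "B - 1 \<ge> 0" by simp_all
  then obtain a b where "A = int a" "B - 1 = int b" using nonneg_int_cases by metis
  then have ab: "A = int a" "B = int b + 1" by simp_all
  have g1: "gq q A (B - 1) = qp q (a+b) / (qp q a * qp q b)" using ab gq_nat[of q a b] by simp
  have g2: "gq q A B = qp q (Suc (a+b)) / (qp q a * qp q (Suc b))" using ab gq_nat[of q a "Suc b"] by (simp add: add.commute)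
  have p: "q powi B = q ^ Suc b" "q powi (A + B) = q ^ Suc (a + b)"
    using ab power_int_of_nat[of q "Suc b"] power_int_of_nat[of q "Suc (a+b)"] by (simp_all add: add.commute add.left_commute)
  have pa: "qp q a > 0" "qp q b > 0" "qp q (a+b) > 0" using qp_pos[OF assms] by auto
  have "1 - q ^ Suc b > 0" using power_Suc_less_one[OF assms(1,2), of b] by simp
  then show ?thesis unfolding g1 g2 p
    using pa by (simp add: qp_Suc[OF assms] field_simps)
qed

lemma K2:
  assumes "0 < q" "q < 1" "A + B \<ge> 0"
  shows "(1 - y) * gq q (A + 1) B - (1 - y * q powi (A + 1)) * gq q (A + 1) (B - 1)
         = (q powi B - y) * gq q A B"
proof -
  have "B < 0 \<or> A < -1 \<or> (A = -1 \<and> B \<ge> 1) \<or> (A \<ge> 0 \<and> B = 0) \<or> (A \<ge> 0 \<and> B \<ge> 1)" using assms by arith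
  then consider "B < 0" | "A < -1" | "A = -1 \<and> B \<ge> 1" | "A \<ge> 0 \<and> B = 0" | "A \<ge> 0 \<and> B \<ge> 1" by blast
  then show ?thesis
  proof cases
    case 1 then show ?thesis by (simp add: gq_neg2)
  next
    case 2 then show ?thesis by (simp add: gq_neg1)
  next
    case 3
    then have "B - 1 \<ge> 0" by simp
    then obtain b where "B - 1 = int b" using nonneg_int_cases by blast
    then have b: "B = int b + 1" by simp
    have "gq q 0 B = 1" "gq q 0 (B - 1) = 1" unfolding b
      using gq_nat[of q 0 "Suc b"] gq_nat[of q 0 b] qp_0[OF assms(1,2)] qp_nz[OF assms(1,2)]
      by (simp_all add: of_nat_Suc add.commute)
    then show ?thesis using 3 by (simp add: gq_neg1)
  next
    case 4
    then obtain a where a: "A = int a" using nonneg_int_cases by blast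
    have "gq q (A + 1) 0 = 1" "gq q A 0 = 1" unfolding a
      using gq_nat[of q "Suc a" 0] gq_nat[of q a 0] qp_0[OF assms(1,2)] qp_nz[OF assms(1,2)]
      by (simp_all add: add.commute)
    then show ?thesis using 4 by (simp add: gq_neg2)
  next
    case 5
    then have "A \<ge> 0" "B - 1 \<ge> 0" by simp_all
    then obtain a b where "A = int a" "B - 1 = int b" using nonneg_int_cases by metis
    then have ab: "A = int a" "B = int b + 1" by simp_all
    define X where "X = q ^ Suc a"
    define Y where "Y = q ^ Suc b"
    define R where "R = qp q (Suc (a+b))"
    have X1: "1 - X \<noteq> 0" "1 - Y \<noteq> 0"
      using power_Suc_less_one[OF assms(1,2), of b] power_Suc_less_one[OF assms(1,2), of a]
      by (simp_all add: X_def Y_def)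
    have nz: "qp q a \<noteq> 0" "qp q b \<noteq> 0" using qp_nz[OF assms(1,2)] by auto
    have xy: "q ^ Suc (Suc (a+b)) = X * Y" by (simp add: X_def Y_def power_add)
    have g1: "gq q (A+1) B = R * (1 - X*Y) / (qp q a * (1 - X) * (qp q b * (1 - Y)))"
      using ab gq_nat[of q "Suc a" "Suc b"] qp_Suc[OF assms(1,2), of "Suc (a+b)"] xy
      by (simp add: add.commute R_def qp_Suc[OF assms(1,2), of a] qp_Suc[OF assms(1,2), of b] X_def Y_def)
    have g2: "gq q (A+1) (B-1) = R / (qp q a * (1 - X) * qp q b)"
      using ab gq_nat[of q "Suc a" b] by (simp add: add.commute R_def qp_Suc[OF assms(1,2), of a] X_def)
    have g3: "gq q A B = R / (qp q a * (qp q b * (1 - Y)))"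
      using ab gq_nat[of q a "Suc b"] by (simp add: add.commute R_def qp_Suc[OF assms(1,2), of b] Y_def)
    have p: "q powi (A + 1) = X" "q powi B = Y"
      using ab power_int_of_nat[of q "Suc a"] power_int_of_nat[of q "Suc b"] by (simp_all add: add.commute X_def Y_def)
    define G where "G = R / (qp q a * (qp q b * (1 - Y)))"
    have h1: "gq q (A+1) B = G * ((1 - X*Y) / (1 - X))" unfolding g1 G_def using X1 nz by (simp add: field_simps)
    have GY: "G * (1 - Y) = R / (qp q a * qp q b)" unfolding G_def using X1 by simp
    have h2: "gq q (A+1) (B-1) = G * ((1 - Y) / (1 - X))"
    proof -
      have "G * ((1 - Y) / (1 - X)) = (G * (1 - Y)) / (1 - X)" by simp
      also have "\<dots> = R / (qp q a * (1 - X) * qp q b)" unfolding GY by (simp add: mult_ac)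
      finally show ?thesis unfolding g2 by simp
    qed
    have num: "(1-y) * (1 - X*Y) - (1 - y*X) * (1 - Y) = (Y - y) * (1 - X)" by (simp add: algebra_simps)
    define c where "c = G / (1 - X)"
    have h1': "gq q (A+1) B = c * (1 - X*Y)" unfolding h1 c_def by simp
    have h2': "gq q (A+1) (B-1) = c * (1 - Y)" unfolding h2 c_def by simp
    have "(1 - y) * gq q (A + 1) B - (1 - y * X) * gq q (A + 1) (B - 1)
        = c * ((1-y) * (1 - X*Y) - (1 - y*X) * (1 - Y))"
      unfolding h1' h2' by (simp add: algebra_simps)
    also have "\<dots> = (Y - y) * G" unfolding num c_def using X1 by simp
    finally show ?thesis unfolding p g3 G_def .
  qed
qed




definition wpr :: "real \<Rightarrow> nat \<Rightarrow> (nat \<Rightarrow> int) \<Rightarrow> (nat \<Rightarrow> int) \<Rightarrow> real" where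
  "wpr q k L M = (\<Prod>i<k-1. gq q (L i - M i) (M i - L (Suc i)))"

definition cc :: "real \<Rightarrow> (nat \<Rightarrow> int) \<Rightarrow> nat \<Rightarrow> real" where
  "cc q L l = (if l = 1 then 1 else 1 - q powi (L (l-2) - L (l-1)))"

definition dd :: "real \<Rightarrow> (nat \<Rightarrow> int) \<Rightarrow> nat \<Rightarrow> real" where
  "dd q M l = (if l = 1 then 1 else 1 - q powi (M (l-2) - M (l-1) + 1))"

lemma wpr_Suc: "wpr q (Suc (Suc n)) L M = wpr q (Suc n) L M * gq q (L n - M n) (M n - L (Suc n))"
  by (simp add: wpr_def)

lemma wpr_cong: "(\<And>i. i \<le> n \<Longrightarrow> L' i = L i) \<Longrightarrow> (\<And>i. i < n \<Longrightarrow> M' i = M i) \<Longrightarrow>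
   wpr q (Suc n) L' M' = wpr q (Suc n) L M"
  unfolding wpr_def by (intro prod.cong) auto

lemma F1_aux:
  assumes q: "0 < q" "q < 1"
  shows "(\<forall>i. Suc i < Suc n \<longrightarrow> L (Suc i) \<le> L i) \<longrightarrow>
    (\<Sum>l=1..Suc n. cc q L l * wpr q (Suc n) (L(l-1 := L(l-1)+1)) M)
      = wpr q (Suc n) L M + (\<Sum>l=1..n. dd q M l * wpr q (Suc n) L (M(l-1 := M(l-1) - 1)))
    \<and> cc q L (Suc n) * wpr q (Suc n) (L(n := L n + 1)) M
      = (1 - (if n = 0 then 0 else q powi (M (n-1) - L n))) * wpr q (Suc n) L M"
proof (induction n)
  case 0
  show ?case by (simp add: wpr_def cc_def)
next
  case (Suc n)
  show ?case
  proof
    assume sorted: "\<forall>i. Suc i < Suc (Suc n) \<longrightarrow> L (Suc i) \<le> L i"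
    then have sorted': "\<forall>i. Suc i < Suc n \<longrightarrow> L (Suc i) \<le> L i" by auto
    note IH = mp[OF Suc.IH sorted']
    have IH1:
      "(\<Sum>l=1..Suc n. cc q L l * wpr q (Suc n) (L(l-1 := L(l-1)+1)) M)
      = wpr q (Suc n) L M + (\<Sum>l=1..n. dd q M l * wpr q (Suc n) L (M(l-1 := M(l-1) - 1)))"
      using IH by (rule conjunct1)
    have IH2: "cc q L (Suc n) * wpr q (Suc n) (L(n := L n + 1)) M
      = (1 - (if n = 0 then 0 else q powi (M (n-1) - L n))) * wpr q (Suc n) L M"
      using IH by (rule conjunct2)
    define A where "A = L n - M n"
    define B where "B = M n - L (Suc n)"
    define y where "y = (if n = 0 then 0 else q powi (M (n-1) - L n))"
    define W where "W = wpr q (Suc n) L M"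
    define G where "G = gq q A B"
    have AB: "A + B \<ge> 0" using sorted by (auto simp: A_def B_def)
    have t1: "\<And>l. l \<in> {1..n} \<Longrightarrow> cc q L l * wpr q (Suc (Suc n)) (L(l-1 := L(l-1)+1)) M
        = G * (cc q L l * wpr q (Suc n) (L(l-1 := L(l-1)+1)) M)"
      by (auto simp: wpr_Suc G_def A_def B_def)
    have t2: "\<And>l. l \<in> {1..n} \<Longrightarrow> dd q M l * wpr q (Suc (Suc n)) L (M(l-1 := M(l-1) - 1))
        = G * (dd q M l * wpr q (Suc n) L (M(l-1 := M(l-1) - 1)))"
      by (auto simp: wpr_Suc G_def A_def B_def)
    have s1: "(\<Sum>l=1..n. cc q L l * wpr q (Suc (Suc n)) (L(l-1 := L(l-1)+1)) M)
       = G * (\<Sum>l=1..n. cc q L l * wpr q (Suc n) (L(l-1 := L(l-1)+1)) M)"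
      unfolding sum_distrib_left by (intro sum.cong refl) (rule t1)
    have s2: "(\<Sum>l=1..n. dd q M l * wpr q (Suc (Suc n)) L (M(l-1 := M(l-1) - 1)))
       = G * (\<Sum>l=1..n. dd q M l * wpr q (Suc n) L (M(l-1 := M(l-1) - 1)))"
      unfolding sum_distrib_left by (intro sum.cong refl) (rule t2)
    have IH1': "(\<Sum>l=1..n. cc q L l * wpr q (Suc n) (L(l-1 := L(l-1)+1)) M)
       = W + (\<Sum>l=1..n. dd q M l * wpr q (Suc n) L (M(l-1 := M(l-1) - 1))) - (1 - y) * W"
      using IH1 IH2 by (simp add: sum.cl_ivl_Suc W_def y_def)
    have ta0: "wpr q (Suc (Suc n)) (L(n := L n + 1)) M = wpr q (Suc n) (L(n := L n + 1)) M * gq q (A + 1) B"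
      unfolding wpr_Suc A_def B_def by (simp add: algebra_simps)
    have ta: "cc q L (Suc n) * wpr q (Suc (Suc n)) (L(n := L n + 1)) M = (1 - y) * W * gq q (A + 1) B"
      by (simp only: ta0 mult.assoc[symmetric] IH2) (simp add: y_def W_def)
    have wfb: "wpr q (Suc n) (L(Suc n := L (Suc n) + 1)) M = W"
      unfolding W_def by (rule wpr_cong) auto
    have tb: "cc q L (Suc (Suc n)) * wpr q (Suc (Suc n)) (L(Suc n := L (Suc n) + 1)) M
       = (1 - q powi B) * (W * G)"
    proof -
      have "cc q L (Suc (Suc n)) = 1 - q powi (A + B)" by (simp add: cc_def A_def B_def)
      moreover have "wpr q (Suc (Suc n)) (L(Suc n := L (Suc n) + 1)) M = W * gq q A (B - 1)"
        using wfb by (simp add: wpr_Suc A_def B_def algebra_simps)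
      ultimately have "cc q L (Suc (Suc n)) * wpr q (Suc (Suc n)) (L(Suc n := L (Suc n) + 1)) M
         = (1 - q powi (A + B)) * (W * gq q A (B - 1))" by simp
      also have "\<dots> = W * ((1 - q powi (A + B)) * gq q A (B - 1))" by (simp only: mult_ac)
      also have "\<dots> = W * ((1 - q powi B) * G)" using K1[OF q, of A B] by (simp add: G_def)
      also have "\<dots> = (1 - q powi B) * (W * G)" by (simp only: mult_ac)
      finally show ?thesis .
    qed
    have wfc: "wpr q (Suc n) L (M(n := M n - 1)) = W"
      unfolding W_def by (rule wpr_cong) auto
    have ddn: "dd q M (Suc n) = 1 - y * q powi (A + 1)"
    proof (cases "n = 0")
      case True then show ?thesis by (simp add: dd_def y_def)
    next
      case False
      have "y * q powi (A + 1) = q powi (M (n-1) - L n + (A + 1))"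
        using False q by (simp add: y_def power_int_add)
      also have "M (n-1) - L n + (A + 1) = M (Suc n - 2) - M (Suc n - 1) + 1"
        using False by (simp add: A_def)
      finally show ?thesis using False by (simp add: dd_def)
    qed
    have tc: "dd q M (Suc n) * wpr q (Suc (Suc n)) L (M(n := M n - 1))
       = (1 - y * q powi (A + 1)) * W * gq q (A + 1) (B - 1)"
    proof -
      have tc0: "wpr q (Suc (Suc n)) L (M(n := M n - 1)) = wpr q (Suc n) L (M(n := M n - 1)) * gq q (A + 1) (B - 1)"
        unfolding wpr_Suc A_def B_def by (simp add: algebra_simps)
      show ?thesis by (simp only: tc0 wfc ddn mult_ac)
    qed
    have k2: "(1 - y) * gq q (A + 1) B - (1 - y * q powi (A + 1)) * gq q (A + 1) (B - 1)
         = (q powi B - y) * G"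
      using K2[OF q AB] by (simp add: G_def)
    have main: "(\<Sum>l=1..Suc (Suc n). cc q L l * wpr q (Suc (Suc n)) (L(l-1 := L(l-1)+1)) M)
      = wpr q (Suc (Suc n)) L M + (\<Sum>l=1..Suc n. dd q M l * wpr q (Suc (Suc n)) L (M(l-1 := M(l-1) - 1)))"
    proof -
      have "(\<Sum>l=1..Suc (Suc n). cc q L l * wpr q (Suc (Suc n)) (L(l-1 := L(l-1)+1)) M)
         = G * (\<Sum>l=1..n. cc q L l * wpr q (Suc n) (L(l-1 := L(l-1)+1)) M)
           + (1 - y) * W * gq q (A + 1) B + (1 - q powi B) * (W * G)"
        using s1 ta tb by (simp add: sum.cl_ivl_Suc)
      moreover have "wpr q (Suc (Suc n)) L M + (\<Sum>l=1..Suc n. dd q M l * wpr q (Suc (Suc n)) L (M(l-1 := M(l-1) - 1)))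
         = W * G + G * (\<Sum>l=1..n. dd q M l * wpr q (Suc n) L (M(l-1 := M(l-1) - 1)))
           + (1 - y * q powi (A + 1)) * W * gq q (A + 1) (B - 1)"
        using s2 tc by (simp add: sum.cl_ivl_Suc wpr_Suc W_def G_def A_def B_def)
      moreover have "G * (W + (\<Sum>l=1..n. dd q M l * wpr q (Suc n) L (M(l-1 := M(l-1) - 1))) - (1 - y) * W)
           + (1 - y) * W * gq q (A + 1) B + (1 - q powi B) * (W * G)
         = W * G + G * (\<Sum>l=1..n. dd q M l * wpr q (Suc n) L (M(l-1 := M(l-1) - 1)))
           + (1 - y * q powi (A + 1)) * W * gq q (A + 1) (B - 1)"
      proof -
        have "W * ((1 - y) * gq q (A + 1) B - (1 - y * q powi (A + 1)) * gq q (A + 1) (B - 1))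
            = W * ((q powi B - y) * G)" using k2 by simp
        then show ?thesis by (simp add: algebra_simps)
      qed
      ultimately show ?thesis using IH1' by simp
    qed
    have last: "cc q L (Suc (Suc n)) * wpr q (Suc (Suc n)) (L(Suc n := L (Suc n) + 1)) M
      = (1 - (if Suc n = 0 then 0 else q powi (M (Suc n - 1) - L (Suc n)))) * wpr q (Suc (Suc n)) L M"
      using tb by (simp add: wpr_Suc W_def G_def A_def B_def)
    show "(\<Sum>l=1..Suc (Suc n). cc q L l * wpr q (Suc (Suc n)) (L(l-1 := L(l-1)+1)) M)
      = wpr q (Suc (Suc n)) L M + (\<Sum>l=1..Suc n. dd q M l * wpr q (Suc (Suc n)) L (M(l-1 := M(l-1) - 1)))
      \<and> cc q L (Suc (Suc n)) * wpr q (Suc (Suc n)) (L(Suc n := L (Suc n) + 1)) M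
      = (1 - (if Suc n = 0 then 0 else q powi (M (Suc n - 1) - L (Suc n)))) * wpr q (Suc (Suc n)) L M"
      using main last by blast
  qed
qed

lemma F1:
  assumes q: "0 < q" "q < 1" and k: "1 \<le> k" and sorted: "\<forall>i. Suc i < k \<longrightarrow> L (Suc i) \<le> L i"
  shows "(\<Sum>l=1..k. cc q L l * wpr q k (L(l-1 := L(l-1)+1)) M)
      = wpr q k L M + (\<Sum>l=1..k-1. dd q M l * wpr q k L (M(l-1 := M(l-1) - 1)))"
proof -
  obtain n where n: "k = Suc n" using k by (cases k) auto
  show ?thesis using mp[OF F1_aux[OF q, of n L M]] sorted unfolding n by auto
qed

definition ee :: "real \<Rightarrow> nat \<Rightarrow> (nat \<Rightarrow> int) \<Rightarrow> nat \<Rightarrow> real" where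
  "ee q k L l = (if l = k then 1 else 1 - q powi (L (l-1) - L l))"

definition ff :: "real \<Rightarrow> nat \<Rightarrow> (nat \<Rightarrow> int) \<Rightarrow> nat \<Rightarrow> real" where
  "ff q k M m = (if m = k - 1 then 1 else 1 - q powi (M (m-1) - M m + 1))"

definition Lr :: "nat \<Rightarrow> (nat \<Rightarrow> int) \<Rightarrow> nat \<Rightarrow> int" where
  "Lr k L = (\<lambda>i. - L (k - 1 - i))"

definition Mr :: "nat \<Rightarrow> (nat \<Rightarrow> int) \<Rightarrow> nat \<Rightarrow> int" where
  "Mr k M = (\<lambda>i. - M (k - 2 - i))"

lemma wpr_refl: "wpr q k (Lr k L) (Mr k M) = wpr q k L M"
  unfolding wpr_def Lr_def Mr_def
proof (rule prod.reindex_bij_witness[where i="\<lambda>i. k - 2 - i" and j="\<lambda>i. k - 2 - i"])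
  fix i assume i: "i \<in> {..<k-1}"
  have e1: "k - 1 - i = Suc (k - 2 - i)" "k - 1 - Suc i = k - 2 - i"
    using i by auto
  show "gq q (L (k - 2 - i) - M (k - 2 - i)) (M (k - 2 - i) - L (Suc (k - 2 - i)))
      = gq q (- L (k - 1 - i) - - M (k - 2 - i)) (- M (k - 2 - i) - - L (k - 1 - Suc i))"
    unfolding e1 by (subst gq_sym) simp
qed auto

lemma F2:
  assumes q: "0 < q" "q < 1" and k: "1 \<le> k" and sorted: "\<forall>i. Suc i < k \<longrightarrow> L (Suc i) \<le> L i"
  shows "(\<Sum>l=1..k. ee q k L l * wpr q k (L(l-1 := L(l-1) - 1)) M)
      = wpr q k L M + (\<Sum>m=1..k-1. ff q k M m * wpr q k L (M(m-1 := M(m-1) + 1)))"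
proof -
  obtain n where n: "k = Suc n" using k by (cases k) auto
  have sorted': "\<forall>i. Suc i < k \<longrightarrow> Lr k L (Suc i) \<le> Lr k L i"
  proof (intro allI impI)
    fix i assume "Suc i < k"
    then have "Suc (k - 1 - Suc i) < k" "k - 1 - i = Suc (k - 1 - Suc i)" by auto
    then show "Lr k L (Suc i) \<le> Lr k L i" using sorted unfolding Lr_def by (metis neg_le_iff_le)
  qed
  from F1[OF q k sorted', of "Mr k M"]
  have E: "(\<Sum>l=1..k. cc q (Lr k L) l * wpr q k ((Lr k L)(l-1 := Lr k L (l-1)+1)) (Mr k M))
      = wpr q k (Lr k L) (Mr k M) + (\<Sum>l=1..k-1. dd q (Mr k M) l * wpr q k (Lr k L) ((Mr k M)(l-1 := Mr k M (l-1) - 1)))" .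
  have lhs: "(\<Sum>l=1..k. cc q (Lr k L) l * wpr q k ((Lr k L)(l-1 := Lr k L (l-1)+1)) (Mr k M))
     = (\<Sum>l=1..k. ee q k L l * wpr q k (L(l-1 := L(l-1) - 1)) M)"
  proof -
    have "(\<Sum>l=1..k. ee q k L l * wpr q k (L(l-1 := L(l-1) - 1)) M)
      = (\<Sum>l=1..k. ee q k L (k + 1 - l) * wpr q k (L(k + 1 - l - 1 := L(k + 1 - l - 1) - 1)) M)"
      by (subst sum.atLeastAtMost_rev) simp
    also have "\<dots> = (\<Sum>l=1..k. cc q (Lr k L) l * wpr q k ((Lr k L)(l-1 := Lr k L (l-1)+1)) (Mr k M))"
    proof (rule sum.cong[OF refl])
      fix l assume l: "l \<in> {1..k}"
      have c: "ee q k L (k + 1 - l) = cc q (Lr k L) l"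
      proof (cases "l = 1")
        case True then show ?thesis by (simp add: ee_def cc_def)
      next
        case False
        then have "k + 1 - l \<noteq> k" "k - 1 - (l - 2) = k + 1 - l" "k - 1 - (l - 1) = k + 1 - l - 1"
          "k + 1 - l - 1 = k - l" using l by auto
        then show ?thesis using False by (simp add: ee_def cc_def Lr_def)
      qed
      have w: "wpr q k ((Lr k L)(l-1 := Lr k L (l-1)+1)) (Mr k M)
          = wpr q k (Lr k (L(k + 1 - l - 1 := L(k + 1 - l - 1) - 1))) (Mr k M)"
        unfolding n
      proof (rule wpr_cong)
        fix i assume "i \<le> n"
        then show "((Lr (Suc n) L)(l - 1 := Lr (Suc n) L (l - 1) + 1)) i
           = Lr (Suc n) (L(Suc n + 1 - l - 1 := L (Suc n + 1 - l - 1) - 1)) i"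
          using l n by (auto simp: Lr_def)
      qed simp
      show "ee q k L (k + 1 - l) * wpr q k (L(k + 1 - l - 1 := L(k + 1 - l - 1) - 1)) M
          = cc q (Lr k L) l * wpr q k ((Lr k L)(l-1 := Lr k L (l-1)+1)) (Mr k M)"
        unfolding c w wpr_refl ..
    qed
    finally show ?thesis by simp
  qed
  have rhs: "(\<Sum>l=1..k-1. dd q (Mr k M) l * wpr q k (Lr k L) ((Mr k M)(l-1 := Mr k M (l-1) - 1)))
     = (\<Sum>m=1..k-1. ff q k M m * wpr q k L (M(m-1 := M(m-1) + 1)))"
  proof -
    have "(\<Sum>m=1..k-1. ff q k M m * wpr q k L (M(m-1 := M(m-1) + 1)))
      = (\<Sum>l=1..k-1. ff q k M (k - l) * wpr q k L (M(k - l - 1 := M(k - l - 1) + 1)))"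
      by (subst sum.atLeastAtMost_rev) (simp add: n)?
    also have "\<dots> = (\<Sum>l=1..k-1. dd q (Mr k M) l * wpr q k (Lr k L) ((Mr k M)(l-1 := Mr k M (l-1) - 1)))"
    proof (rule sum.cong[OF refl])
      fix l assume l: "l \<in> {1..k-1}"
      have c: "ff q k M (k - l) = dd q (Mr k M) l"
      proof (cases "l = 1")
        case True then show ?thesis by (simp add: ff_def dd_def)
      next
        case False
        then have "k - l \<noteq> k - 1" "k - 2 - (l - 2) = k - l" "k - 2 - (l - 1) = k - l - 1"
          using l by auto
        then show ?thesis using False by (simp add: ff_def dd_def Mr_def)
      qed
      have w: "wpr q k (Lr k L) ((Mr k M)(l-1 := Mr k M (l-1) - 1))
          = wpr q k (Lr k L) (Mr k (M(k - l - 1 := M(k - l - 1) + 1)))"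
        unfolding n
      proof (rule wpr_cong)
        fix i assume "i < n"
        then show "((Mr (Suc n) M)(l - 1 := Mr (Suc n) M (l - 1) - 1)) i
           = Mr (Suc n) (M(Suc n - l - 1 := M (Suc n - l - 1) + 1)) i"
          using l n by (auto simp: Mr_def)
      qed simp
      show "ff q k M (k - l) * wpr q k L (M(k - l - 1 := M(k - l - 1) + 1))
          = dd q (Mr k M) l * wpr q k (Lr k L) ((Mr k M)(l-1 := Mr k M (l-1) - 1))"
        unfolding c w wpr_refl ..
    qed
    finally show ?thesis by simp
  qed
  show ?thesis using E unfolding lhs rhs wpr_refl .
qed




lemma sum_list_upd_int: "j < length xs \<Longrightarrow> sum_list (xs[j := v]) = sum_list xs - xs!j + (v::int)"
proof (induction xs arbitrary: j)
  case Nil then show ?case by simp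
next
  case (Cons x xs) then show ?case by (cases j) auto
qed

lemma nth_upd_fun: "j < length xs \<Longrightarrow> nth (xs[j := v]) = (nth xs)(j := v)"
  by (auto simp: fun_eq_iff nth_list_update)

lemma sig_sorted: "is_sig lam \<Longrightarrow> \<forall>i. Suc i < length lam \<longrightarrow> lam!(Suc i) \<le> lam!i"
  unfolding is_sig_def by (auto simp: sorted_wrt_iff_nth_less)

lemma Pskew_wpr: "Pskew q lam mu a = a powi (sum_list lam - sum_list mu) * of_real (wpr q (length lam) (nth lam) (nth mu))"
  unfolding Pskew_def wpr_def gq_def by (simp add: mult.assoc)

lemma part1:
  fixes a :: real
  assumes q: "0 < q" "q < 1" and k: "1 \<le> k" "length lam = k" "is_sig lam" "length mu = k - 1" and a: "0 < a"
  shows "(\<Sum>l=1..k. (if l = 1 then 1 else 1 - q powi (lam!(l-2) - lam!(l-1)))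
                   * Pskew q (lam[l-1 := lam!(l-1) + 1]) mu a)
      = a * Pskew q lam mu a
        + (\<Sum>l=1..k-1. (if l = 1 then 1 else 1 - q powi (mu!(l-2) - mu!(l-1) + 1))
                   * Pskew q lam (mu[l-1 := mu!(l-1) - 1]) a)"
proof -
  define S where "S = sum_list lam - sum_list mu"
  define L where "L = nth lam"
  define M where "M = nth mu"
  have aS: "a powi (S + 1) = a * a powi S" using a by (simp add: power_int_add)
  have lhs: "\<And>l. l \<in> {1..k} \<Longrightarrow> (if l = 1 then 1 else 1 - q powi (lam!(l-2) - lam!(l-1)))
                   * Pskew q (lam[l-1 := lam!(l-1) + 1]) mu a
      = a powi (S + 1) * (cc q L l * wpr q k (L(l-1 := L(l-1)+1)) M)"
  proof -
    fix l assume l: "l \<in> {1..k}"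
    then have l1: "l - 1 < length lam" using k by auto
    show "?thesis l"
      unfolding Pskew_wpr using l1 k
      by (simp add: sum_list_upd_int nth_upd_fun cc_def L_def M_def S_def algebra_simps)
  qed
  have rhs: "\<And>l. l \<in> {1..k-1} \<Longrightarrow> (if l = 1 then 1 else 1 - q powi (mu!(l-2) - mu!(l-1) + 1))
                   * Pskew q lam (mu[l-1 := mu!(l-1) - 1]) a
      = a powi (S + 1) * (dd q M l * wpr q k L (M(l-1 := M(l-1) - 1)))"
  proof -
    fix l assume l: "l \<in> {1..k-1}"
    then have l1: "l - 1 < length mu" using k by auto
    show "?thesis l"
      unfolding Pskew_wpr using l1 k
      by (simp add: sum_list_upd_int nth_upd_fun dd_def L_def M_def S_def algebra_simps)
  qed
  have "(\<Sum>l=1..k. (if l = 1 then 1 else 1 - q powi (lam!(l-2) - lam!(l-1)))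
                   * Pskew q (lam[l-1 := lam!(l-1) + 1]) mu a)
     = a powi (S + 1) * (\<Sum>l=1..k. cc q L l * wpr q k (L(l-1 := L(l-1)+1)) M)"
    unfolding sum_distrib_left by (rule sum.cong[OF refl]) (rule lhs)
  also have "\<dots> = a powi (S + 1) * (wpr q k L M + (\<Sum>l=1..k-1. dd q M l * wpr q k L (M(l-1 := M(l-1) - 1))))"
    using F1[OF q k(1)] sig_sorted[OF k(3)] k(2) unfolding L_def by simp
  also have "\<dots> = a * Pskew q lam mu a + (\<Sum>l=1..k-1. a powi (S + 1) * (dd q M l * wpr q k L (M(l-1 := M(l-1) - 1))))"
    unfolding Pskew_wpr aS using k by (simp add: algebra_simps sum_distrib_left L_def M_def S_def)
  also have "\<dots> = a * Pskew q lam mu a + (\<Sum>l=1..k-1. (if l = 1 then 1 else 1 - q powi (mu!(l-2) - mu!(l-1) + 1))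
                   * Pskew q lam (mu[l-1 := mu!(l-1) - 1]) a)"
    using rhs by simp
  finally show ?thesis .
qed

lemma dual_list:
  fixes a :: "'a::{real_normed_field,banach}"
  assumes q: "0 < q" "q < 1" and k: "1 \<le> k" "length lam = k" "is_sig lam" "length mu = k - 1" and a: "a \<noteq> 0"
  shows "(\<Sum>l=1..k. of_real (ee q k (nth lam) l) * Pskew q (lam[l-1 := lam!(l-1) - 1]) mu a)
      = inverse a * Pskew q lam mu a
        + (\<Sum>m=1..k-1. of_real (ff q k (nth mu) m) * Pskew q lam (mu[m-1 := mu!(m-1) + 1]) a)"
proof -
  define S where "S = sum_list lam - sum_list mu"
  define L where "L = nth lam"
  define M where "M = nth mu"
  have aS: "a powi (S - 1) = inverse a * a powi S"
    using a power_int_add[of a S "-1"] by (simp add: power_int_minus mult.commute)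
  have lhs: "\<And>l. l \<in> {1..k} \<Longrightarrow> of_real (ee q k (nth lam) l) * Pskew q (lam[l-1 := lam!(l-1) - 1]) mu a
      = a powi (S - 1) * of_real (ee q k L l * wpr q k (L(l-1 := L(l-1) - 1)) M)"
  proof -
    fix l assume l: "l \<in> {1..k}"
    then have l1: "l - 1 < length lam" using k by auto
    show "?thesis l"
      unfolding Pskew_wpr using l1 k
      by (simp add: sum_list_upd_int nth_upd_fun L_def M_def S_def algebra_simps)
  qed
  have rhs: "\<And>m. m \<in> {1..k-1} \<Longrightarrow> of_real (ff q k (nth mu) m) * Pskew q lam (mu[m-1 := mu!(m-1) + 1]) a
      = a powi (S - 1) * of_real (ff q k M m * wpr q k L (M(m-1 := M(m-1) + 1)))"
  proof -
    fix m assume m: "m \<in> {1..k-1}"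
    then have m1: "m - 1 < length mu" using k by auto
    show "?thesis m"
      unfolding Pskew_wpr using m1 k
      by (simp add: sum_list_upd_int nth_upd_fun L_def M_def S_def algebra_simps)
  qed
  have "(\<Sum>l=1..k. of_real (ee q k (nth lam) l) * Pskew q (lam[l-1 := lam!(l-1) - 1]) mu a)
     = a powi (S - 1) * of_real (\<Sum>l=1..k. ee q k L l * wpr q k (L(l-1 := L(l-1) - 1)) M)"
    unfolding sum_distrib_left of_real_sum by (rule sum.cong[OF refl]) (rule lhs)
  also have "\<dots> = a powi (S - 1) * of_real (wpr q k L M + (\<Sum>m=1..k-1. ff q k M m * wpr q k L (M(m-1 := M(m-1) + 1))))"
    using F2[OF q k(1)] sig_sorted[OF k(3)] k(2) unfolding L_def by simp
  also have "\<dots> = inverse a * Pskew q lam mu a + (\<Sum>m=1..k-1. a powi (S - 1) * of_real (ff q k M m * wpr q k L (M(m-1 := M(m-1) + 1))))"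
    unfolding Pskew_wpr aS using k by (simp add: algebra_simps sum_distrib_left L_def M_def S_def of_real_sum)
  also have "\<dots> = inverse a * Pskew q lam mu a + (\<Sum>m=1..k-1. of_real (ff q k (nth mu) m) * Pskew q lam (mu[m-1 := mu!(m-1) + 1]) a)"
    using rhs by simp
  finally show ?thesis .
qed




definition IL :: "int list \<Rightarrow> int list set" where
  "IL lam = {mu. interlace mu lam}"

lemma interlace_len: "interlace mu lam \<Longrightarrow> length lam = Suc (length mu)"
  by (simp add: interlace_def)

lemma sig_nth_mono: "is_sig lam \<Longrightarrow> i \<le> j \<Longrightarrow> j < length lam \<Longrightarrow> lam!j \<le> lam!i"
  unfolding is_sig_def by (cases "i = j") (auto simp: sorted_wrt_iff_nth_less)

lemma interlace_sig: assumes "interlace mu lam" "is_sig lam" shows "is_sig mu"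
proof -
  have "\<forall>i j. i < j \<and> j < length mu \<longrightarrow> mu!j \<le> mu!i"
  proof (intro allI impI)
    fix i j assume ij: "i < j \<and> j < length mu"
    have l: "length lam = Suc (length mu)" using assms(1) by (simp add: interlace_def)
    have "mu!j \<le> lam!j" using assms(1) ij by (simp add: interlace_def)
    also have "\<dots> \<le> lam!(Suc i)" using sig_nth_mono[OF assms(2), of "Suc i" j] ij l by simp
    also have "\<dots> \<le> mu!i" using assms(1) ij by (simp add: interlace_def)
    finally show "mu!j \<le> mu!i" .
  qed
  then show ?thesis unfolding is_sig_def sorted_wrt_iff_nth_less by simp
qed

lemma IL_finite: assumes "is_sig lam" "length lam = Suc n" shows "finite (IL lam)"
proof (rule finite_subset)
  show "IL lam \<subseteq> {mu. set mu \<subseteq> {lam!n..lam!0} \<and> length mu = n}"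
  proof
    fix mu assume "mu \<in> IL lam"
    then have il: "interlace mu lam" by (simp add: IL_def)
    then have len: "length mu = n" using assms by (simp add: interlace_def)
    have "set mu \<subseteq> {lam!n..lam!0}"
    proof
      fix v assume "v \<in> set mu"
      then obtain i where i: "i < length mu" "v = mu!i" by (auto simp: in_set_conv_nth)
      have "lam!n \<le> lam!(Suc i)" using sig_nth_mono[OF assms(1), of "Suc i" n] i len assms by simp
      also have "\<dots> \<le> v" using il i by (simp add: interlace_def)
      finally have 1: "lam!n \<le> v" .
      have "v \<le> lam!i" using il i by (simp add: interlace_def)
      also have "\<dots> \<le> lam!0" using sig_nth_mono[OF assms(1), of 0 i] i len assms by simp
      finally show "v \<in> {lam!n..lam!0}" using 1 by simp
    qed
    then show "mu \<in> {mu. set mu \<subseteq> {lam!n..lam!0} \<and> length mu = n}" using len by simp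
  qed
  show "finite {mu. set mu \<subseteq> {lam!n..lam!0} \<and> length mu = n}"
    by (rule finite_lists_length_eq) simp
qed

lemma GT_0: "GT 0 lam = (if lam = [] then {[]} else {})"
  by (auto simp: GT_def)

lemma GT_empty: "\<not> is_sig lam \<or> length lam \<noteq> Suc n \<Longrightarrow> GT (Suc n) lam = {}"
  by (auto simp: GT_def)

lemma GT_last: "T \<in> GT (Suc n) mu \<Longrightarrow> T!n = mu"
  by (simp add: GT_def)

lemma GT_Suc:
  assumes "is_sig lam" "length lam = Suc n"
  shows "GT (Suc n) lam = (\<lambda>(mu,T). T @ [lam]) ` (SIGMA mu:IL lam. GT n mu)"
proof
  show "GT (Suc n) lam \<subseteq> (\<lambda>(mu,T). T @ [lam]) ` (SIGMA mu:IL lam. GT n mu)"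
  proof
    fix T assume T: "T \<in> GT (Suc n) lam"
    have lenT: "length T = Suc n" and lev: "\<forall>j<Suc n. length (T!j) = j+1 \<and> is_sig (T!j)"
      and il: "\<forall>j. j+1 < Suc n \<longrightarrow> interlace (T!j) (T!(j+1))" and last: "T!n = lam"
      using T by (auto simp: GT_def)
    define mu where "mu = (if n = 0 then [] else T!(n-1))"
    define T' where "T' = take n T"
    have TT: "T = T' @ [lam]" unfolding T'_def using lenT last
      by (metis lessI take_Suc_conv_app_nth take_all order_refl)
    have nth': "\<And>j. j < n \<Longrightarrow> T'!j = T!j" by (simp add: T'_def)
    have muIL: "mu \<in> IL lam"
    proof (cases "n = 0")
      case True then show ?thesis using assms by (simp add: mu_def IL_def interlace_def)
    next
      case False
      then have "interlace (T!(n-1)) (T!n)" using il[rule_format, of "n-1"] by simp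
      then show ?thesis using False last by (simp add: mu_def IL_def)
    qed
    have "T' \<in> GT n mu"
      unfolding GT_def using lenT lev il nth' by (auto simp: T'_def mu_def)
    then show "T \<in> (\<lambda>(mu,T). T @ [lam]) ` (SIGMA mu:IL lam. GT n mu)"
      using muIL TT by force
  qed
next
  show "(\<lambda>(mu,T). T @ [lam]) ` (SIGMA mu:IL lam. GT n mu) \<subseteq> GT (Suc n) lam"
  proof clarsimp
    fix mu T assume mu: "mu \<in> IL lam" and T: "T \<in> GT n mu"
    have lenT: "length T = n" and lev: "\<forall>j<n. length (T!j) = j+1 \<and> is_sig (T!j)"
      and il: "\<forall>j. j+1 < n \<longrightarrow> interlace (T!j) (T!(j+1))" and last: "if n = 0 then mu = [] else T!(n-1) = mu"
      using T by (auto simp: GT_def)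
    have ilm: "interlace mu lam" using mu by (simp add: IL_def)
    show "T @ [lam] \<in> GT (Suc n) lam"
      unfolding GT_def
    proof (intro CollectI conjI allI impI)
      show "length (T @ [lam]) = Suc n" using lenT by simp
    next
      fix j assume "j < Suc n"
      then show "length ((T @ [lam])!j) = j+1"
        using lev lenT assms by (cases "j < n") (auto simp: nth_append)
    next
      fix j assume "j < Suc n"
      then show "is_sig ((T @ [lam])!j)"
        using lev lenT assms by (cases "j < n") (auto simp: nth_append)
    next
      fix j assume j: "j + 1 < Suc n"
      show "interlace ((T @ [lam])!j) ((T @ [lam])!(j+1))"
      proof (cases "j + 1 < n")
        case True then show ?thesis using il lenT by (simp add: nth_append)
      next
        case False
        then have "j + 1 = n" using j by simp
        then show ?thesis using last ilm lenT by (auto simp: nth_append)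
      qed
    next
      show "if Suc n = 0 then lam = [] else (T @ [lam]) ! (Suc n - 1) = lam" using lenT by (simp add: nth_append)
    qed
  qed
qed

lemma GT_finite: "finite (GT n lam)"
proof (induction n arbitrary: lam)
  case 0 then show ?case by (simp add: GT_0)
next
  case (Suc n)
  show ?case
  proof (cases "is_sig lam \<and> length lam = Suc n")
    case True
    then show ?thesis unfolding GT_Suc[OF conjunct1[OF True] conjunct2[OF True]]
      using IL_finite[of lam n] True Suc.IH by (intro finite_imageI finite_SigmaI) auto
  next
    case False then show ?thesis using GT_empty[of lam n] by auto
  qed
qed

lemma GT_inj: "inj_on (\<lambda>(mu,T). T @ [lam]) (SIGMA mu:IL lam. GT n mu)"
proof (rule inj_onI)
  fix p1 p2
  assume p1: "p1 \<in> (SIGMA mu:IL lam. GT n mu)" and p2: "p2 \<in> (SIGMA mu:IL lam. GT n mu)"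
    and eq: "(\<lambda>(mu,T). T @ [lam]) p1 = (\<lambda>(mu,T). T @ [lam]) p2"
  obtain mu1 T1 where e1: "p1 = (mu1, T1)" by (cases p1)
  obtain mu2 T2 where e2: "p2 = (mu2, T2)" by (cases p2)
  have a: "T1 \<in> GT n mu1" "T2 \<in> GT n mu2" "T1 = T2" using p1 p2 eq e1 e2 by auto
  have "mu1 = mu2"
  proof (cases "n = 0")
    case True then show ?thesis using a by (simp add: GT_0 split: if_splits)
  next
    case False
    then have "T1!(n-1) = mu1" "T2!(n-1) = mu2" using a by (auto simp: GT_def)
    then show ?thesis using a by simp
  qed
  then show "p1 = p2" using e1 e2 a by simp
qed

lemma Pfun_rec:
  fixes x :: "nat \<Rightarrow> 'a::{real_normed_field,banach}"
  assumes "is_sig lam" "length lam = Suc n"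
  shows "Pfun q lam x = (\<Sum>mu\<in>IL lam. Pfun q mu x * Pskew q lam mu (x n))"
proof -
  define F where "F = (\<lambda>T. \<Prod>j<Suc n. Pskew q (T!j) (if j = 0 then [] else T!(j-1)) (x j))"
  have "Pfun q lam x = sum F (GT (Suc n) lam)" unfolding Pfun_def F_def using assms by simp
  also have "\<dots> = sum (F \<circ> (\<lambda>(mu,T). T @ [lam])) (SIGMA mu:IL lam. GT n mu)"
    unfolding GT_Suc[OF assms] by (rule sum.reindex[OF GT_inj])
  also have "\<dots> = (\<Sum>(mu,T)\<in>(SIGMA mu:IL lam. GT n mu). F (T @ [lam]))"
    by (rule sum.cong) auto
  also have "\<dots> = (\<Sum>mu\<in>IL lam. \<Sum>T\<in>GT n mu. F (T @ [lam]))"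
    by (rule sum.Sigma[symmetric]) (auto intro: IL_finite[OF assms] GT_finite)
  also have "\<dots> = (\<Sum>mu\<in>IL lam. Pfun q mu x * Pskew q lam mu (x n))"
  proof (rule sum.cong[OF refl])
    fix mu assume mu: "mu \<in> IL lam"
    have lmu: "length mu = n" using mu assms by (simp add: IL_def interlace_def)
    have "\<And>T. T \<in> GT n mu \<Longrightarrow> F (T @ [lam])
       = (\<Prod>j<n. Pskew q (T!j) (if j = 0 then [] else T!(j-1)) (x j)) * Pskew q lam mu (x n)"
    proof -
      fix T assume T: "T \<in> GT n mu"
      have lenT: "length T = n" using T by (simp add: GT_def)
      have last: "(if n = 0 then [] else T!(n-1)) = mu"
        using T lmu by (auto simp: GT_def)
      have "F (T @ [lam]) = (\<Prod>j<n. Pskew q ((T @ [lam])!j) (if j = 0 then [] else (T @ [lam])!(j-1)) (x j))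
           * Pskew q lam (if n = 0 then [] else (T @ [lam])!(n-1)) (x n)"
        unfolding F_def using lenT by (simp add: nth_append)
      also have "(\<Prod>j<n. Pskew q ((T @ [lam])!j) (if j = 0 then [] else (T @ [lam])!(j-1)) (x j))
          = (\<Prod>j<n. Pskew q (T!j) (if j = 0 then [] else T!(j-1)) (x j))"
        using lenT by (intro prod.cong) (auto simp: nth_append)
      also have "(if n = 0 then [] else (T @ [lam])!(n-1)) = mu"
        using last lenT by (auto simp: nth_append)
      finally show "F (T @ [lam])
       = (\<Prod>j<n. Pskew q (T!j) (if j = 0 then [] else T!(j-1)) (x j)) * Pskew q lam mu (x n)" .
    qed
    then have "(\<Sum>T\<in>GT n mu. F (T @ [lam]))
        = (\<Sum>T\<in>GT n mu. \<Prod>j<n. Pskew q (T!j) (if j = 0 then [] else T!(j-1)) (x j)) * Pskew q lam mu (x n)"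
      by (simp add: sum_distrib_right)
    also have "\<dots> = Pfun q mu x * Pskew q lam mu (x n)" unfolding Pfun_def lmu ..
    finally show "(\<Sum>T\<in>GT n mu. F (T @ [lam])) = Pfun q mu x * Pskew q lam mu (x n)" .
  qed
  finally show ?thesis .
qed




lemma Pskew_not_IL:
  assumes "length nu = length lam' - 1" "length lam' \<ge> 1" "nu \<notin> IL lam'"
  shows "Pskew q lam' nu a = 0"
proof -
  have "\<not> interlace nu lam'" using assms by (simp add: IL_def)
  then obtain l where l: "l < length nu" "\<not> (lam'!(l+1) \<le> nu!l \<and> nu!l \<le> lam'!l)"
    using assms unfolding interlace_def by auto
  have "gq q (lam'!l - nu!l) (nu!l - lam'!(Suc l)) = 0"
    using l by (auto simp: gq_neg1 gq_neg2)
  then have "wpr q (length lam') (nth lam') (nth nu) = 0"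
    unfolding wpr_def using l assms by (intro prod_zero) (auto intro!: bexI[of _ l])
  then show ?thesis by (simp add: Pskew_wpr)
qed

lemma sig_lower:
  assumes "is_sig lam" "l \<in> {1..length lam}" "ee q (length lam) (nth lam) l \<noteq> 0"
  shows "is_sig (lam[l-1 := lam!(l-1) - 1])"
proof -
  have c: "l = length lam \<or> lam!l < lam!(l-1)"
  proof (rule ccontr)
    assume "\<not> ?thesis"
    then have "l < length lam" "lam!l \<ge> lam!(l-1)" using assms(2) by auto
    moreover have "lam!l \<le> lam!(l-1)" using sig_nth_mono[OF assms(1), of "l-1" l] calculation by simp
    ultimately have "lam!(l-1) - lam!l = 0" by simp
    then show False using assms(3) \<open>l < length lam\<close> by (simp add: ee_def)
  qed
  have "\<forall>i j. i < j \<and> j < length lam \<longrightarrow> lam[l-1 := lam!(l-1) - 1]!j \<le> lam[l-1 := lam!(l-1) - 1]!i"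
  proof (intro allI impI)
    fix i j assume ij: "i < j \<and> j < length lam"
    have m: "lam!j \<le> lam!i" using sig_nth_mono[OF assms(1), of i j] ij by simp
    show "lam[l-1 := lam!(l-1) - 1]!j \<le> lam[l-1 := lam!(l-1) - 1]!i"
    proof (cases "i = l - 1")
      case True
      then have "j \<ge> l" using ij assms(2) by auto
      then have "lam!j < lam!(l-1)" using c sig_nth_mono[OF assms(1), of l j] ij by auto
      then show ?thesis using True ij by (auto simp: nth_list_update)
    next
      case False
      have "lam[l-1 := lam!(l-1) - 1]!j \<le> lam!j" using ij by (cases "j = l - 1") (auto simp: nth_list_update)
      then show ?thesis using m ij False by (auto simp: nth_list_update)
    qed
  qed
  then show ?thesis unfolding is_sig_def sorted_wrt_iff_nth_less by simp
qed

lemma Pfun_nonsig: "\<not> is_sig lam \<Longrightarrow> Pfun q lam x = 0"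
proof -
  assume ns: "\<not> is_sig lam"
  then have "lam \<noteq> []" by (auto simp: is_sig_def)
  then obtain n where "length lam = Suc n" by (cases "length lam") auto
  then show ?thesis using GT_empty[of lam n] ns by (simp add: Pfun_def)
qed




lemma sum_IL_U:
  assumes "IL lam \<subseteq> U" "finite U" "\<forall>nu\<in>U. length nu = length lam - 1" "length lam \<ge> 1"
  shows "(\<Sum>nu\<in>IL lam. f nu * Pskew q lam nu a) = (\<Sum>nu\<in>U. f nu * Pskew q lam nu a)"
proof (rule sum.mono_neutral_left[OF assms(2,1)], intro ballI)
  fix nu assume "nu \<in> U - IL lam"
  then have "Pskew q lam nu a = 0" using assms by (intro Pskew_not_IL) auto
  then show "f nu * Pskew q lam nu a = 0" by simp
qed

lemma pieri_step_D:
  fixes x :: "nat \<Rightarrow> 'a::{real_normed_field,banach}"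
  assumes sig: "is_sig lam" and len: "length lam = Suc n" and m: "m \<in> {1..n}"
    and U: "U = {nu. set nu \<subseteq> {lam!n - 1..lam!0} \<and> length nu = n}"
  shows "(\<Sum>mu\<in>U. of_real (ee q n (nth mu) m) * Pfun q (mu[m-1 := mu!(m-1) - 1]) x * Pskew q lam mu a)
       = (\<Sum>nu\<in>U. of_real (ff q (Suc n) (nth nu) m) * Pfun q nu x * Pskew q lam (nu[m-1 := nu!(m-1) + 1]) a)"
proof -
  define D where "D = {mu\<in>U. mu!(m-1) \<noteq> lam!n - 1}"
  define E where "E = {nu\<in>U. nu!(m-1) \<noteq> lam!0}"
  have finU: "finite U" unfolding U by (rule finite_lists_length_eq) simp
  have m1: "m - 1 < n" using m by auto
  have lamn: "lam!n \<le> lam!m" using sig_nth_mono[OF sig, of m n] m len by auto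
  have lam0: "lam!(m-1) \<le> lam!0" using sig_nth_mono[OF sig, of 0 "m-1"] m len by auto
  have s1: "(\<Sum>mu\<in>U. of_real (ee q n (nth mu) m) * Pfun q (mu[m-1 := mu!(m-1) - 1]) x * Pskew q lam mu a)
        = (\<Sum>mu\<in>D. of_real (ee q n (nth mu) m) * Pfun q (mu[m-1 := mu!(m-1) - 1]) x * Pskew q lam mu a)"
  proof (rule sum.mono_neutral_right[OF finU])
    show "D \<subseteq> U" by (auto simp: D_def)
    show "\<forall>mu\<in>U - D. of_real (ee q n (nth mu) m) * Pfun q (mu[m-1 := mu!(m-1) - 1]) x * Pskew q lam mu a = 0"
    proof
      fix mu assume mu: "mu \<in> U - D"
      then have "mu!(m-1) = lam!n - 1" "length mu = n" by (auto simp: D_def U)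
      moreover have "Suc (m - 1) = m" using m by auto
      ultimately have "mu \<notin> IL lam" using lamn m1 unfolding IL_def interlace_def
        by (auto intro!: exI[of _ "m-1"])
      then have "Pskew q lam mu a = 0" using Pskew_not_IL[of mu lam] \<open>length mu = n\<close> len by simp
      then show "of_real (ee q n (nth mu) m) * Pfun q (mu[m-1 := mu!(m-1) - 1]) x * Pskew q lam mu a = 0" by simp
    qed
  qed
  have s2: "(\<Sum>nu\<in>U. of_real (ff q (Suc n) (nth nu) m) * Pfun q nu x * Pskew q lam (nu[m-1 := nu!(m-1) + 1]) a)
        = (\<Sum>nu\<in>E. of_real (ff q (Suc n) (nth nu) m) * Pfun q nu x * Pskew q lam (nu[m-1 := nu!(m-1) + 1]) a)"
  proof (rule sum.mono_neutral_right[OF finU])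
    show "E \<subseteq> U" by (auto simp: E_def)
    show "\<forall>nu\<in>U - E. of_real (ff q (Suc n) (nth nu) m) * Pfun q nu x * Pskew q lam (nu[m-1 := nu!(m-1) + 1]) a = 0"
    proof
      fix nu assume nu: "nu \<in> U - E"
      then have "nu!(m-1) = lam!0" "length nu = n" by (auto simp: E_def U)
      then have "nu[m-1 := nu!(m-1) + 1] \<notin> IL lam" using lam0 m1 by (auto simp: IL_def interlace_def)
      then have "Pskew q lam (nu[m-1 := nu!(m-1) + 1]) a = 0"
        using Pskew_not_IL[of "nu[m-1 := nu!(m-1) + 1]" lam] \<open>length nu = n\<close> len by simp
      then show "of_real (ff q (Suc n) (nth nu) m) * Pfun q nu x * Pskew q lam (nu[m-1 := nu!(m-1) + 1]) a = 0" by simp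
    qed
  qed
  have s3: "(\<Sum>mu\<in>D. of_real (ee q n (nth mu) m) * Pfun q (mu[m-1 := mu!(m-1) - 1]) x * Pskew q lam mu a)
        = (\<Sum>nu\<in>E. of_real (ff q (Suc n) (nth nu) m) * Pfun q nu x * Pskew q lam (nu[m-1 := nu!(m-1) + 1]) a)"
  proof (rule sum.reindex_bij_witness[where i="\<lambda>nu. nu[m-1 := nu!(m-1) + 1]" and j="\<lambda>mu. mu[m-1 := mu!(m-1) - 1]"])
    fix mu assume mu: "mu \<in> D"
    then have lmu: "length mu = n" and setmu: "set mu \<subseteq> {lam!n - 1..lam!0}" and ne: "mu!(m-1) \<noteq> lam!n - 1"
      by (auto simp: D_def U)
    have inr: "mu!(m-1) \<in> {lam!n - 1..lam!0}" using setmu m1 lmu by (auto simp: subset_iff)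
    show "(mu[m-1 := mu!(m-1) - 1])[m-1 := (mu[m-1 := mu!(m-1) - 1])!(m-1) + 1] = mu"
      using m1 lmu by simp
    show "mu[m-1 := mu!(m-1) - 1] \<in> E"
    proof -
      have "set (mu[m-1 := mu!(m-1) - 1]) \<subseteq> insert (mu!(m-1) - 1) (set mu)" by (rule set_update_subset_insert)
      then have "set (mu[m-1 := mu!(m-1) - 1]) \<subseteq> {lam!n - 1..lam!0}" using setmu inr ne by auto
      moreover have "mu[m-1 := mu!(m-1) - 1]!(m-1) \<noteq> lam!0" using inr m1 lmu by auto
      ultimately show ?thesis using lmu by (simp add: E_def U)
    qed
    have ee_ff: "ee q n (nth mu) m = ff q (Suc n) (nth (mu[m-1 := mu!(m-1) - 1])) m"
    proof (cases "m = n")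
      case True then show ?thesis by (simp add: ee_def ff_def)
    next
      case False
      then have "m < n" using m by auto
      then show ?thesis using m1 lmu m False by (simp add: ee_def ff_def nth_list_update)
    qed
    show "of_real (ff q (Suc n) (nth (mu[m-1 := mu!(m-1) - 1])) m) * Pfun q (mu[m-1 := mu!(m-1) - 1]) x
          * Pskew q lam ((mu[m-1 := mu!(m-1) - 1])[m-1 := (mu[m-1 := mu!(m-1) - 1])!(m-1) + 1]) a
        = of_real (ee q n (nth mu) m) * Pfun q (mu[m-1 := mu!(m-1) - 1]) x * Pskew q lam mu a"
      using m1 lmu ee_ff by simp
  next
    fix nu assume nu: "nu \<in> E"
    then have lnu: "length nu = n" and setnu: "set nu \<subseteq> {lam!n - 1..lam!0}" and ne: "nu!(m-1) \<noteq> lam!0"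
      by (auto simp: E_def U)
    have inr: "nu!(m-1) \<in> {lam!n - 1..lam!0}" using setnu m1 lnu by (auto simp: subset_iff)
    show "(nu[m-1 := nu!(m-1) + 1])[m-1 := (nu[m-1 := nu!(m-1) + 1])!(m-1) - 1] = nu"
      using m1 lnu by simp
    show "nu[m-1 := nu!(m-1) + 1] \<in> D"
    proof -
      have "set (nu[m-1 := nu!(m-1) + 1]) \<subseteq> insert (nu!(m-1) + 1) (set nu)" by (rule set_update_subset_insert)
      then have "set (nu[m-1 := nu!(m-1) + 1]) \<subseteq> {lam!n - 1..lam!0}" using setnu inr ne by auto
      moreover have "nu[m-1 := nu!(m-1) + 1]!(m-1) \<noteq> lam!n - 1" using inr m1 lnu by auto
      ultimately show ?thesis using lnu by (simp add: D_def U)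
    qed
  qed
  show ?thesis using s1 s2 s3 by simp
qed

lemma pieri:
  fixes x :: "nat \<Rightarrow> 'a::{real_normed_field,banach}"
  assumes q: "0 < q" "q < 1" and x: "\<forall>j. x j \<noteq> 0"
  shows "\<forall>lam. is_sig lam \<longrightarrow> length lam = n \<longrightarrow>
    (\<Sum>j<n. inverse (x j)) * Pfun q lam x
      = (\<Sum>l=1..n. of_real (ee q n (nth lam) l) * Pfun q (lam[l-1 := lam!(l-1) - 1]) x)"
proof (induction n)
  case 0 then show ?case by simp
next
  case (Suc n)
  show ?case
  proof (intro allI impI)
    fix lam :: "int list" assume sig: "is_sig lam" and len: "length lam = Suc n"
    define U where "U = {nu. set nu \<subseteq> {lam!n - 1..lam!0} \<and> length nu = n}"
    define w where "w = (\<lambda>lam' nu. Pskew q lam' nu (x n))"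
    have finU: "finite U" unfolding U_def by (rule finite_lists_length_eq) simp
    have Ulen: "\<forall>nu\<in>U. length nu = n" by (simp add: U_def)
    have lam0: "\<And>i. i < Suc n \<Longrightarrow> lam!i \<le> lam!0" using sig_nth_mono[OF sig, of 0] len by simp
    have lamn: "\<And>i. i < Suc n \<Longrightarrow> lam!n \<le> lam!i" using sig_nth_mono[OF sig, of _ n] len by simp
    have ILsub: "\<And>l. l \<in> {1..Suc n} \<Longrightarrow> IL (lam[l-1 := lam!(l-1) - 1]) \<subseteq> U"
    proof
      fix l nu assume l: "l \<in> {1..Suc n}" and nu: "nu \<in> IL (lam[l-1 := lam!(l-1) - 1])"
      then have il: "interlace nu (lam[l-1 := lam!(l-1) - 1])" by (simp add: IL_def)
      then have lnu: "length nu = n" using len by (simp add: interlace_def)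
      have "set nu \<subseteq> {lam!n - 1..lam!0}"
      proof
        fix v assume "v \<in> set nu"
        then obtain i where i: "i < n" "v = nu!i" using lnu by (auto simp: in_set_conv_nth)
        have "lam[l-1 := lam!(l-1) - 1]!(Suc i) \<le> v" "v \<le> lam[l-1 := lam!(l-1) - 1]!i"
          using il i lnu by (auto simp: interlace_def)
        moreover have "lam[l-1 := lam!(l-1) - 1]!(Suc i) \<ge> lam!(Suc i) - 1"
          using len i by (cases "Suc i = l - 1") (auto simp: nth_list_update)
        moreover have "lam[l-1 := lam!(l-1) - 1]!i \<le> lam!i"
          using len i by (cases "i = l - 1") (auto simp: nth_list_update)
        ultimately show "v \<in> {lam!n - 1..lam!0}" using lam0[of i] lamn[of "Suc i"] i by auto
      qed
      then show "nu \<in> U" using lnu by (simp add: U_def)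
    qed
    have ILsub0: "IL lam \<subseteq> U"
    proof
      fix nu assume "nu \<in> IL lam"
      then have il: "interlace nu lam" by (simp add: IL_def)
      then have lnu: "length nu = n" using len by (simp add: interlace_def)
      have "set nu \<subseteq> {lam!n - 1..lam!0}"
      proof
        fix v assume "v \<in> set nu"
        then obtain i where i: "i < n" "v = nu!i" using lnu by (auto simp: in_set_conv_nth)
        have "lam!(Suc i) \<le> v" "v \<le> lam!i" using il i lnu by (auto simp: interlace_def)
        then show "v \<in> {lam!n - 1..lam!0}" using lam0[of i] lamn[of "Suc i"] i by auto
      qed
      then show "nu \<in> U" using lnu by (simp add: U_def)
    qed
    have L1: "(\<Sum>j<Suc n. inverse (x j)) * Pfun q lam x
       = (\<Sum>mu\<in>U. ((\<Sum>j<n. inverse (x j)) * Pfun q mu x) * w lam mu)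
         + (\<Sum>mu\<in>U. inverse (x n) * Pfun q mu x * w lam mu)"
    proof -
      have "Pfun q lam x = (\<Sum>mu\<in>U. Pfun q mu x * w lam mu)"
        unfolding Pfun_rec[OF sig len] w_def
        by (rule sum_IL_U[OF ILsub0 finU]) (use Ulen len in auto)
      then show ?thesis
        by (simp add: sum_distrib_left sum_distrib_right sum.distrib algebra_simps)
    qed
    have L2: "(\<Sum>mu\<in>U. ((\<Sum>j<n. inverse (x j)) * Pfun q mu x) * w lam mu)
       = (\<Sum>m=1..n. \<Sum>mu\<in>U. of_real (ee q n (nth mu) m) * Pfun q (mu[m-1 := mu!(m-1) - 1]) x * w lam mu)"
    proof -
      have "(\<Sum>mu\<in>U. ((\<Sum>j<n. inverse (x j)) * Pfun q mu x) * w lam mu)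
         = (\<Sum>mu\<in>U. (\<Sum>m=1..n. of_real (ee q n (nth mu) m) * Pfun q (mu[m-1 := mu!(m-1) - 1]) x) * w lam mu)"
      proof (rule sum.cong[OF refl])
        fix mu assume mu: "mu \<in> U"
        show "((\<Sum>j<n. inverse (x j)) * Pfun q mu x) * w lam mu
           = (\<Sum>m=1..n. of_real (ee q n (nth mu) m) * Pfun q (mu[m-1 := mu!(m-1) - 1]) x) * w lam mu"
        proof (cases "mu \<in> IL lam")
          case True
          then have "is_sig mu" using interlace_sig sig by (auto simp: IL_def)
          then show ?thesis using Suc.IH mu Ulen by auto
        next
          case False
          then have "w lam mu = 0" unfolding w_def using mu Ulen len by (intro Pskew_not_IL) auto
          then show ?thesis by simp
        qed
      qed
      also have "\<dots> = (\<Sum>m=1..n. \<Sum>mu\<in>U. of_real (ee q n (nth mu) m) * Pfun q (mu[m-1 := mu!(m-1) - 1]) x * w lam mu)"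
        by (simp add: sum_distrib_right) (rule sum.swap)
      finally show ?thesis .
    qed
    have L3: "(\<Sum>m=1..n. \<Sum>mu\<in>U. of_real (ee q n (nth mu) m) * Pfun q (mu[m-1 := mu!(m-1) - 1]) x * w lam mu)
      = (\<Sum>m=1..n. \<Sum>nu\<in>U. of_real (ff q (Suc n) (nth nu) m) * Pfun q nu x * w lam (nu[m-1 := nu!(m-1) + 1]))"
      unfolding w_def by (rule sum.cong[OF refl]) (rule pieri_step_D[OF sig len _ U_def])
    have R1: "(\<Sum>l=1..Suc n. of_real (ee q (Suc n) (nth lam) l) * Pfun q (lam[l-1 := lam!(l-1) - 1]) x)
      = (\<Sum>l=1..Suc n. of_real (ee q (Suc n) (nth lam) l) * (\<Sum>nu\<in>U. Pfun q nu x * w (lam[l-1 := lam!(l-1) - 1]) nu))"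
    proof (rule sum.cong[OF refl])
      fix l assume l: "l \<in> {1..Suc n}"
      show "of_real (ee q (Suc n) (nth lam) l) * Pfun q (lam[l-1 := lam!(l-1) - 1]) x
          = of_real (ee q (Suc n) (nth lam) l) * (\<Sum>nu\<in>U. Pfun q nu x * w (lam[l-1 := lam!(l-1) - 1]) nu)"
      proof (cases "ee q (Suc n) (nth lam) l = 0")
        case True then show ?thesis by simp
      next
        case False
        then have sig': "is_sig (lam[l-1 := lam!(l-1) - 1])" using sig_lower[OF sig, of l q] l len by simp
        have len': "length (lam[l-1 := lam!(l-1) - 1]) = Suc n" using len by simp
        have "Pfun q (lam[l-1 := lam!(l-1) - 1]) x = (\<Sum>nu\<in>U. Pfun q nu x * w (lam[l-1 := lam!(l-1) - 1]) nu)"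
          unfolding Pfun_rec[OF sig' len'] w_def
          by (rule sum_IL_U[OF ILsub[OF l] finU]) (use Ulen len in auto)
        then show ?thesis by simp
      qed
    qed
    have R2: "(\<Sum>l=1..Suc n. of_real (ee q (Suc n) (nth lam) l) * (\<Sum>nu\<in>U. Pfun q nu x * w (lam[l-1 := lam!(l-1) - 1]) nu))
      = (\<Sum>nu\<in>U. Pfun q nu x * (\<Sum>l=1..Suc n. of_real (ee q (Suc n) (nth lam) l) * w (lam[l-1 := lam!(l-1) - 1]) nu))"
    proof -
      have "(\<Sum>l=1..Suc n. of_real (ee q (Suc n) (nth lam) l) * (\<Sum>nu\<in>U. Pfun q nu x * w (lam[l-1 := lam!(l-1) - 1]) nu))
        = (\<Sum>l=1..Suc n. \<Sum>nu\<in>U. of_real (ee q (Suc n) (nth lam) l) * (Pfun q nu x * w (lam[l-1 := lam!(l-1) - 1]) nu))"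
        by (simp only: sum_distrib_left)
      also have "\<dots> = (\<Sum>nu\<in>U. \<Sum>l=1..Suc n. of_real (ee q (Suc n) (nth lam) l) * (Pfun q nu x * w (lam[l-1 := lam!(l-1) - 1]) nu))"
        by (rule sum.swap)
      also have "\<dots> = (\<Sum>nu\<in>U. Pfun q nu x * (\<Sum>l=1..Suc n. of_real (ee q (Suc n) (nth lam) l) * w (lam[l-1 := lam!(l-1) - 1]) nu))"
        by (simp only: sum_distrib_left mult_ac)
      finally show ?thesis .
    qed
    have R3: "\<And>nu. nu \<in> U \<Longrightarrow> (\<Sum>l=1..Suc n. of_real (ee q (Suc n) (nth lam) l) * w (lam[l-1 := lam!(l-1) - 1]) nu)
       = inverse (x n) * w lam nu + (\<Sum>m=1..n. of_real (ff q (Suc n) (nth nu) m) * w lam (nu[m-1 := nu!(m-1) + 1]))"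
    proof -
      fix nu assume "nu \<in> U"
      then have "length nu = Suc n - 1" using Ulen by simp
      from dual_list[OF q _ len sig this, of "x n"] x
      show "?thesis nu" unfolding w_def by simp
    qed
    have R4: "(\<Sum>nu\<in>U. Pfun q nu x * (\<Sum>l=1..Suc n. of_real (ee q (Suc n) (nth lam) l) * w (lam[l-1 := lam!(l-1) - 1]) nu))
      = (\<Sum>mu\<in>U. inverse (x n) * Pfun q mu x * w lam mu)
        + (\<Sum>m=1..n. \<Sum>nu\<in>U. of_real (ff q (Suc n) (nth nu) m) * Pfun q nu x * w lam (nu[m-1 := nu!(m-1) + 1]))"
    proof -
      have "(\<Sum>nu\<in>U. Pfun q nu x * (\<Sum>l=1..Suc n. of_real (ee q (Suc n) (nth lam) l) * w (lam[l-1 := lam!(l-1) - 1]) nu))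
        = (\<Sum>nu\<in>U. Pfun q nu x * (inverse (x n) * w lam nu + (\<Sum>m=1..n. of_real (ff q (Suc n) (nth nu) m) * w lam (nu[m-1 := nu!(m-1) + 1]))))"
        using R3 by (intro sum.cong) auto
      also have "\<dots> = (\<Sum>mu\<in>U. inverse (x n) * Pfun q mu x * w lam mu)
        + (\<Sum>nu\<in>U. \<Sum>m=1..n. of_real (ff q (Suc n) (nth nu) m) * Pfun q nu x * w lam (nu[m-1 := nu!(m-1) + 1]))"
        by (simp add: sum.distrib sum_distrib_left algebra_simps)
      also have "(\<Sum>nu\<in>U. \<Sum>m=1..n. of_real (ff q (Suc n) (nth nu) m) * Pfun q nu x * w lam (nu[m-1 := nu!(m-1) + 1]))
        = (\<Sum>m=1..n. \<Sum>nu\<in>U. of_real (ff q (Suc n) (nth nu) m) * Pfun q nu x * w lam (nu[m-1 := nu!(m-1) + 1]))"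
        by (rule sum.swap)
      finally show ?thesis .
    qed
    show "(\<Sum>j<Suc n. inverse (x j)) * Pfun q lam x
      = (\<Sum>l=1..Suc n. of_real (ee q (Suc n) (nth lam) l) * Pfun q (lam[l-1 := lam!(l-1) - 1]) x)"
      unfolding L1 L2 L3 R1 R2 R4 by (simp add: add.commute)
  qed
qed




lemma norm_exp_quad:
  fixes z :: complex
  assumes "norm z \<le> 1 / 2"
  shows "norm (exp z - 1 - z) \<le> norm z ^ 2"
proof (cases "z = 0")
  case True then show ?thesis by simp
next
  case False
  have sums: "(\<lambda>k. z ^ (k + 2) /\<^sub>R fact (k + 2)) sums (exp z - (\<Sum>k<2. z ^ k /\<^sub>R fact k))"
    by (intro sums_split_initial_segment exp_converges)
  have "summable (\<lambda>k. norm z ^ (k + 2) /\<^sub>R fact (k + 2))"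
    using summable_norm_exp[of z]
    by (intro summable_norm summable_ignore_initial_segment)
       (auto simp: norm_power norm_divide divide_simps)
  also have "?this \<longleftrightarrow> summable (\<lambda>k. norm z ^ 2 * (norm z ^ k / fact (k +2)))"
    by (simp add: power_add mult_ac divide_simps power2_eq_square del: of_nat_Suc of_nat_add)
  also have "\<dots> \<longleftrightarrow> summable (\<lambda>k. norm z ^ k / fact (k + 2))"
    by (subst summable_cmult_iff) (use \<open>z \<noteq> 0\<close> in auto)
  finally have summable: "summable (\<lambda>k. norm z ^ k / fact (k + 2))" .
  have "exp z - 1 - z = (\<Sum>k. z ^ (k + 2) / fact (k + 2))"
    using sums by (simp add: sums_iff scaleR_conv_of_real divide_simps eval_nat_numeral)
  also have "norm \<dots> \<le> (\<Sum>k. norm (z ^ (k + 2) / fact (k + 2)))"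
    using summable_norm_exp[of z]
    by (intro summable_norm summable_ignore_initial_segment)
       (auto simp: norm_power norm_divide divide_simps)
  also have "\<dots> = (\<Sum>k. norm z ^ 2 * (norm z ^ k / fact (k + 2)))"
    by (simp add: power_add norm_power norm_divide mult_ac norm_mult power2_eq_square del: of_nat_Suc)
  also have "\<dots> = norm z ^ 2 * (\<Sum>k. norm z ^ k / fact (k + 2))"
    using summable by (rule suminf_mult)
  also have "\<dots> \<le> norm z ^ 2 * (1 / (1 - norm z) / 2)"
  proof (intro mult_left_mono, rule sums_le)
    show "(\<lambda>k. norm z ^ k / fact (k + 2)) sums (\<Sum>k. norm z ^ k / fact (k + 2))"
      using summable by blast
    show "(\<lambda>k. norm z ^ k / 2) sums (1 / (1 - norm z) / 2)"
      using assms by (intro geometric_sums sums_divide) auto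
  next
    fix k :: nat
    have "norm z ^ k / fact (k + 2) \<le> norm z ^ k / fact 2"
      by (intro divide_left_mono fact_mono) auto
    thus "norm z ^ k / fact (k + 2) \<le> norm z ^ k / 2"
      by simp
  qed (auto simp: divide_simps)
  also have "\<dots> \<le> norm z ^ 2 * 1"
  proof (rule mult_left_mono)
    have "1 - norm z \<ge> 1 / 2" using assms by simp
    then show "1 / (1 - norm z) / 2 \<le> 1" by (simp add: field_simps)
  qed simp
  finally show ?thesis by simp
qed

lemma deriv_integral_exp:
  fixes M :: "'b measure" and G S :: "'b \<Rightarrow> complex"
  assumes fin: "finite_measure M" and mG: "G \<in> borel_measurable M" and mS: "S \<in> borel_measurable M"
    and bG: "\<And>th. norm (G th) \<le> BG" and bS: "\<And>th. norm (S th) \<le> BS"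
  shows "((\<lambda>s. \<integral>th. G th * exp (S th * of_real s) \<partial>M) has_vector_derivative
           (\<integral>th. G th * S th * exp (S th * of_real t) \<partial>M)) (at t)"
proof -
  interpret finite_measure M by (rule fin)
  have BS0: "BS \<ge> 0" using bS[of undefined] norm_ge_zero[of "S undefined"] by linarith
  have BG0: "BG \<ge> 0" using bG[of undefined] norm_ge_zero[of "G undefined"] by linarith
  have nexp: "\<And>th s. norm (exp (S th * of_real s)) \<le> exp (BS * \<bar>s\<bar>)"
  proof -
    fix th s
    have "norm (exp (S th * of_real s)) = exp (Re (S th * of_real s))" by (rule norm_exp_eq_Re)
    also have "Re (S th * of_real s) \<le> norm (S th * of_real s)" by (rule complex_Re_le_cmod)
    also have "norm (S th * of_real s) \<le> BS * \<bar>s\<bar>" using bS[of th] by (simp add: norm_mult mult_right_mono)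
    finally show "norm (exp (S th * of_real s)) \<le> exp (BS * \<bar>s\<bar>)" by simp
  qed
  have intE: "\<And>s. integrable M (\<lambda>th. G th * exp (S th * of_real s))"
  proof -
    fix s
    show "integrable M (\<lambda>th. G th * exp (S th * of_real s))"
    proof (rule integrable_const_bound[where B="BG * exp (BS * \<bar>s\<bar>)"])
      show "AE x in M. norm (G x * exp (S x * of_real s)) \<le> BG * exp (BS * \<bar>s\<bar>)"
      proof (rule AE_I2)
        fix x
        have "norm (G x * exp (S x * of_real s)) = norm (G x) * norm (exp (S x * of_real s))" by (rule norm_mult)
        also have "\<dots> \<le> BG * exp (BS * \<bar>s\<bar>)" by (rule mult_mono[OF bG nexp BG0 norm_ge_zero])
        finally show "norm (G x * exp (S x * of_real s)) \<le> BG * exp (BS * \<bar>s\<bar>)" .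
      qed
    qed (use mG mS in measurable)
  qed
  have intD: "integrable M (\<lambda>th. G th * S th * exp (S th * of_real t))"
  proof (rule integrable_const_bound[where B="BG * BS * exp (BS * \<bar>t\<bar>)"])
    show "AE x in M. norm (G x * S x * exp (S x * of_real t)) \<le> BG * BS * exp (BS * \<bar>t\<bar>)"
    proof (rule AE_I2)
      fix x
      have "norm (G x * S x * exp (S x * of_real t)) = norm (G x) * norm (S x) * norm (exp (S x * of_real t))"
        by (simp add: norm_mult)
      also have "\<dots> \<le> BG * BS * exp (BS * \<bar>t\<bar>)"
        by (intro mult_mono bG bS nexp BG0 BS0 norm_ge_zero mult_nonneg_nonneg)
      finally show "norm (G x * S x * exp (S x * of_real t)) \<le> BG * BS * exp (BS * \<bar>t\<bar>)" .
    qed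
  qed (use mG mS in measurable)
  define D where "D = (\<lambda>s. \<integral>th. G th * exp (S th * of_real s) \<partial>M)"
  define D' where "D' = (\<integral>th. G th * S th * exp (S th * of_real t) \<partial>M)"
  define C where "C = measure M (space M) * (BG * exp (BS * \<bar>t\<bar>) * BS ^ 2)"
  define del where "del = 1 / (2 * (BS + 1))"
  have del0: "del > 0" using BS0 by (simp add: del_def)
  have key: "\<And>y. \<bar>y - t\<bar> < del \<Longrightarrow> norm (D y - D t - (y - t) *\<^sub>R D') \<le> C * \<bar>y - t\<bar> ^ 2"
  proof -
    fix y assume y: "\<bar>y - t\<bar> < del"
    define h where "h = y - t"
    have eq: "D y - D t - (y - t) *\<^sub>R D'
       = (\<integral>th. G th * exp (S th * of_real t) * (exp (S th * of_real h) - 1 - S th * of_real h) \<partial>M)"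
    proof -
      have "D y - D t - (y - t) *\<^sub>R D' = (\<integral>th. G th * exp (S th * of_real y) - G th * exp (S th * of_real t)
                 - of_real h * (G th * S th * exp (S th * of_real t)) \<partial>M)"
        unfolding D_def D'_def using intE intD
        by (simp add: h_def scaleR_conv_of_real)
      also have "\<dots> = (\<integral>th. G th * exp (S th * of_real t) * (exp (S th * of_real h) - 1 - S th * of_real h) \<partial>M)"
      proof (rule Bochner_Integration.integral_cong[OF refl])
        fix th
        have "exp (S th * of_real y) = exp (S th * of_real t) * exp (S th * of_real h)"
          by (simp add: h_def exp_add[symmetric] algebra_simps)
        then show "G th * exp (S th * of_real y) - G th * exp (S th * of_real t)
                 - of_real h * (G th * S th * exp (S th * of_real t))
             = G th * exp (S th * of_real t) * (exp (S th * of_real h) - 1 - S th * of_real h)"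
          by (simp add: algebra_simps)
      qed
      finally show ?thesis .
    qed
    have pt: "\<And>th. norm (G th * exp (S th * of_real t) * (exp (S th * of_real h) - 1 - S th * of_real h))
        \<le> BG * exp (BS * \<bar>t\<bar>) * BS ^ 2 * \<bar>h\<bar> ^ 2"
    proof -
      fix th
      have nsh: "norm (S th * of_real h) \<le> BS * \<bar>h\<bar>" using bS[of th] by (simp add: norm_mult mult_right_mono)
      have "BS * \<bar>h\<bar> \<le> BS * del" using y BS0 by (simp add: h_def mult_left_mono)
      also have "\<dots> \<le> 1 / 2" using BS0 by (simp add: del_def field_simps)
      finally have "norm (S th * of_real h) \<le> 1 / 2" using nsh by linarith
      then have "norm (exp (S th * of_real h) - 1 - S th * of_real h) \<le> norm (S th * of_real h) ^ 2"
        by (rule norm_exp_quad)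
      also have "\<dots> \<le> (BS * \<bar>h\<bar>) ^ 2" using nsh by (intro power_mono) auto
      finally have e2: "norm (exp (S th * of_real h) - 1 - S th * of_real h) \<le> BS ^ 2 * \<bar>h\<bar> ^ 2"
        by (simp add: power_mult_distrib)
      have "norm (G th * exp (S th * of_real t) * (exp (S th * of_real h) - 1 - S th * of_real h))
         = norm (G th) * norm (exp (S th * of_real t)) * norm (exp (S th * of_real h) - 1 - S th * of_real h)"
        by (simp add: norm_mult)
      also have "\<dots> \<le> BG * exp (BS * \<bar>t\<bar>) * (BS ^ 2 * \<bar>h\<bar> ^ 2)"
        by (intro mult_mono bG nexp e2 BG0 norm_ge_zero mult_nonneg_nonneg) auto
      finally show "?thesis th" by (simp add: mult.assoc)
    qed
    have "norm (D y - D t - (y - t) *\<^sub>R D')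
        \<le> (\<integral>th. norm (G th * exp (S th * of_real t) * (exp (S th * of_real h) - 1 - S th * of_real h)) \<partial>M)"
      unfolding eq by (rule integral_norm_bound)
    also have "\<dots> \<le> (\<integral>th. BG * exp (BS * \<bar>t\<bar>) * BS ^ 2 * \<bar>h\<bar> ^ 2 \<partial>M)"
    proof (rule integral_mono)
      show "integrable M (\<lambda>th. norm (G th * exp (S th * of_real t) * (exp (S th * of_real h) - 1 - S th * of_real h)))"
        by (intro integrable_norm integrable_const_bound[where B="BG * exp (BS * \<bar>t\<bar>) * BS ^ 2 * \<bar>h\<bar> ^ 2"])
           (use pt mG mS in auto)
    qed (use pt in auto)
    also have "\<dots> = C * \<bar>y - t\<bar> ^ 2" by (simp add: C_def h_def)
    finally show "norm (D y - D t - (y - t) *\<^sub>R D') \<le> C * \<bar>y - t\<bar> ^ 2" .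
  qed
  have "((\<lambda>y. norm (D y - D t - (y - t) *\<^sub>R D') / norm (y - t)) \<longlongrightarrow> 0) (at t)"
  proof (rule Lim_null_comparison)
    show "\<forall>\<^sub>F y in at t. norm (norm (D y - D t - (y - t) *\<^sub>R D') / norm (y - t)) \<le> C * \<bar>y - t\<bar>"
    proof -
      have "\<forall>\<^sub>F y in at t. \<bar>y - t\<bar> < del"
        using del0 by (auto simp: eventually_at dist_real_def intro!: exI[of _ del])
      then show ?thesis
      proof eventually_elim
        case (elim y)
        show ?case
        proof (cases "y = t")
          case True then show ?thesis by simp
        next
          case False
          have "norm (D y - D t - (y - t) *\<^sub>R D') / \<bar>y - t\<bar> \<le> C * \<bar>y - t\<bar> ^ 2 / \<bar>y - t\<bar>"
            using key[OF elim] False by (intro divide_right_mono) auto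
          also have "\<dots> = C * \<bar>y - t\<bar>"
          proof -
            have "\<And>a::real. a > 0 \<Longrightarrow> C * a ^ 2 / a = C * a" by (simp add: power2_eq_square)
            from this[of "\<bar>y - t\<bar>"] show ?thesis using False by (simp del: power2_abs)
          qed
          finally show ?thesis by simp
        qed
      qed
    qed
    show "((\<lambda>y. C * \<bar>y - t\<bar>) \<longlongrightarrow> 0) (at t)"
    proof -
      have "((\<lambda>y. C * \<bar>y - t\<bar>) \<longlongrightarrow> C * \<bar>t - t\<bar>) (at t)"
        by (intro tendsto_intros)
      then show ?thesis by simp
    qed
  qed
  then have "(D has_derivative (\<lambda>x. x *\<^sub>R D')) (at t)"
    unfolding has_derivative_iff_norm by (auto intro: bounded_linear_scaleR_left)
  then show ?thesis unfolding has_vector_derivative_def D_def D'_def .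
qed




lemma qpinf_norm_upper:
  fixes w :: "'a::{real_normed_field,banach}"
  assumes q: "0 \<le> q" "q < 1"
  shows "norm (qpinf q w) \<le> exp (norm w / (1 - q))"
proof -
  have aq: "\<bar>q\<bar> < 1" using q by simp
  have geo: "\<And>n. (\<Sum>k\<le>n. q ^ k) \<le> 1 / (1 - q)"
  proof -
    fix n
    have "(\<Sum>k<Suc n. q ^ k) \<le> (\<Sum>k. q ^ k)"
      by (rule sum_le_suminf) (use aq q in \<open>auto intro: summable_geometric\<close>)
    then show "(\<Sum>k\<le>n. q ^ k) \<le> 1 / (1 - q)" using aq by (simp add: suminf_geometric lessThan_Suc_atMost)
  qed
  have bnd: "\<And>n. norm (\<Prod>k\<le>n. 1 - w * of_real q ^ k) \<le> exp (norm w / (1 - q))"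
  proof -
    fix n
    have "norm (\<Prod>k\<le>n. 1 - w * of_real q ^ k) = (\<Prod>k\<le>n. norm (1 - w * of_real q ^ k))"
      by (rule prod_norm[symmetric])
    also have "\<dots> \<le> (\<Prod>k\<le>n. exp (norm w * q ^ k))"
    proof (rule prod_mono)
      fix k
      have "norm (1 - w * of_real q ^ k) \<le> norm (1::'a) + norm (w * of_real q ^ k)" by (rule norm_triangle_ineq4)
      also have "\<dots> = 1 + norm w * q ^ k" using q by (simp add: norm_mult norm_power)
      also have "\<dots> \<le> exp (norm w * q ^ k)" by (rule exp_ge_add_one_self)
      finally show "0 \<le> norm (1 - w * of_real q ^ k) \<and> norm (1 - w * of_real q ^ k) \<le> exp (norm w * q ^ k)"
        by simp
    qed
    also have "\<dots> = exp (norm w * (\<Sum>k\<le>n. q ^ k))" by (simp add: exp_sum sum_distrib_left)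
    also have "\<dots> \<le> exp (norm w * (1 / (1 - q)))"
      by (subst exp_le_cancel_iff) (rule mult_left_mono[OF geo[of n] norm_ge_zero])
    finally show "norm (\<Prod>k\<le>n. 1 - w * of_real q ^ k) \<le> exp (norm w / (1 - q))" by simp
  qed
  have "(\<lambda>n. norm (\<Prod>k\<le>n. 1 - w * of_real q ^ k)) \<longlonglongrightarrow> norm (qpinf q w)"
    by (intro tendsto_norm qpinf_LIMSEQ aq)
  then show ?thesis by (rule LIMSEQ_le_const2) (use bnd in auto)
qed

lemma qpinf_norm_lower:
  fixes w :: "'a::{real_normed_field,banach}"
  assumes q: "0 < q" "q < 1" and w: "norm w < 1"
  shows "qpinf q (norm w) \<le> norm (qpinf q w)" "qpinf q (norm w) > 0"
proof -
  have aq: "\<bar>q\<bar> < 1" using q by simp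
  have fpos: "\<And>k. 0 < 1 - norm w * q ^ k" "\<And>k. 1 - norm w * q ^ k \<le> 1"
  proof -
    fix k :: nat
    have "q ^ k \<le> 1" using q by (simp add: power_le_one)
    then have "norm w * q ^ k \<le> norm w" by (simp add: mult_left_le)
    then show "0 < 1 - norm w * q ^ k" using w by simp
    show "1 - norm w * q ^ k \<le> 1" using q by simp
  qed
  have R: "(\<lambda>n. \<Prod>k\<le>n. 1 - norm w * q ^ k) \<longlonglongrightarrow> qpinf q (norm w)"
    using qpinf_LIMSEQ[OF aq, of "norm w"] by simp
  have dec: "decseq (\<lambda>n. \<Prod>k\<le>n. 1 - norm w * q ^ k)"
  proof (rule decseq_SucI)
    fix n
    have "(\<Prod>k\<le>Suc n. 1 - norm w * q ^ k) = (\<Prod>k\<le>n. 1 - norm w * q ^ k) * (1 - norm w * q ^ Suc n)"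
      by simp
    also have "\<dots> \<le> (\<Prod>k\<le>n. 1 - norm w * q ^ k) * 1"
      by (intro mult_left_mono fpos prod_nonneg) (use fpos in \<open>auto intro: less_imp_le\<close>)
    finally show "(\<Prod>k\<le>Suc n. 1 - norm w * q ^ k) \<le> (\<Prod>k\<le>n. 1 - norm w * q ^ k)" by simp
  qed
  have bnd: "\<And>n. qpinf q (norm w) \<le> norm (\<Prod>k\<le>n. 1 - w * of_real q ^ k)"
  proof -
    fix n
    have "qpinf q (norm w) \<le> (\<Prod>k\<le>n. 1 - norm w * q ^ k)" by (rule decseq_ge[OF dec R])
    also have "\<dots> \<le> (\<Prod>k\<le>n. norm (1 - w * of_real q ^ k))"
    proof (rule prod_mono)
      fix k
      have "norm (1::'a) - norm (w * of_real q ^ k) \<le> norm (1 - w * of_real q ^ k)" by (rule norm_triangle_ineq2)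
      then show "0 \<le> 1 - norm w * q ^ k \<and> 1 - norm w * q ^ k \<le> norm (1 - w * of_real q ^ k)"
        using fpos[of k] q by (simp add: norm_mult norm_power)
    qed
    also have "\<dots> = norm (\<Prod>k\<le>n. 1 - w * of_real q ^ k)" by (rule prod_norm)
    finally show "qpinf q (norm w) \<le> norm (\<Prod>k\<le>n. 1 - w * of_real q ^ k)" .
  qed
  have "(\<lambda>n. norm (\<Prod>k\<le>n. 1 - w * of_real q ^ k)) \<longlonglongrightarrow> norm (qpinf q w)"
    by (intro tendsto_norm qpinf_LIMSEQ aq)
  then show "qpinf q (norm w) \<le> norm (qpinf q w)" by (rule LIMSEQ_le_const) (use bnd in auto)
  show "qpinf q (norm w) > 0" using qpinf_real_pos[of q "norm w"] q w by simp
qed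

lemma borel_qpinf:
  assumes "\<bar>q\<bar> < 1"
  shows "(qpinf q :: complex \<Rightarrow> complex) \<in> borel_measurable borel"
proof (rule borel_measurable_LIMSEQ_metric)
  fix n
  show "(\<lambda>w::complex. \<Prod>k\<le>n. 1 - w * of_real q ^ k) \<in> borel_measurable borel"
    by (intro borel_measurable_continuous_onI continuous_intros)
next
  fix w :: complex
  show "(\<lambda>n. \<Prod>k\<le>n. 1 - w * of_real q ^ k) \<longlonglongrightarrow> qpinf q w" by (rule qpinf_LIMSEQ[OF assms])
qed

lemma borel_measurable_qpinf[measurable]:
  assumes "\<bar>q\<bar> < 1" "f \<in> borel_measurable M"
  shows "(\<lambda>x. qpinf q (f x :: complex)) \<in> borel_measurable M"
  using measurable_compose[OF assms(2) borel_qpinf[OF assms(1)]] by simp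

lemma borel_measurable_powi[measurable]:
  fixes f :: "'b \<Rightarrow> complex"
  assumes "f \<in> borel_measurable M"
  shows "(\<lambda>x. f x powi k) \<in> borel_measurable M"
  unfolding power_int_def using assms by measurable




abbreviation M0 :: "real measure" where "M0 \<equiv> restrict_space lborel {0..2*pi}"

definition PM :: "nat \<Rightarrow> (nat \<Rightarrow> real) measure" where
  "PM N = Pi\<^sub>M {..<N} (\<lambda>_. M0)"

definition zz :: "(nat \<Rightarrow> real) \<Rightarrow> nat \<Rightarrow> complex" where
  "zz th = (\<lambda>j. exp (\<i> * of_real (th j)))"

lemma M0_finite: "finite_measure M0"
proof (rule finite_measureI)
  have "emeasure M0 (space M0) = emeasure lborel {0..2*pi}"
    by (subst emeasure_restrict_space) auto
  then show "emeasure M0 (space M0) \<noteq> \<infinity>" by (simp add: emeasure_lborel_Icc_eq)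
qed

lemma PM_finite: "finite_measure (PM N)"
proof -
  interpret product_sigma_finite "\<lambda>_::nat. M0"
    unfolding product_sigma_finite_def using finite_measure.axioms(1)[OF M0_finite] by simp
  show ?thesis
  proof (rule finite_measureI)
    have "emeasure (PM N) (space (PM N)) = (\<Prod>i<N. emeasure M0 (space M0))"
      unfolding PM_def space_PiM by (subst emeasure_PiM) (use sets.top[of M0] in auto)
    then show "emeasure (PM N) (space (PM N)) \<noteq> \<infinity>"
      using finite_measure.emeasure_finite[OF M0_finite] by (simp add: power_eq_top_ennreal)
  qed
qed

lemma zz_meas: "j < N \<Longrightarrow> (\<lambda>th. zz th j) \<in> borel_measurable (PM N)"
proof -
  assume j: "j < N"
  have c: "(\<lambda>th. th j) \<in> measurable (PM N) M0" unfolding PM_def using j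
    by (intro measurable_component_singleton) auto
  have e: "(\<lambda>r::real. exp (\<i> * of_real r)) \<in> borel_measurable M0"
    by (intro measurable_restrict_space1) (simp add: borel_measurable_continuous_onI continuous_intros)
  show ?thesis using measurable_compose[OF c e] by (simp add: zz_def)
qed

lemma zz_norm: "norm (zz th j) = 1"
  by (simp add: zz_def norm_exp_eq_Re)

lemma zz_nz: "zz th j \<noteq> 0"
  by (simp add: zz_def)




lemma Pfun_meas:
  assumes "\<And>j. j < length lam \<Longrightarrow> (\<lambda>th. x th j) \<in> borel_measurable M"
  shows "(\<lambda>th. Pfun q lam (x th) :: complex) \<in> borel_measurable M"
  unfolding Pfun_def Pskew_def
  by (intro borel_measurable_sum borel_measurable_prod borel_measurable_times borel_measurable_powi
        borel_measurable_const assms) auto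

lemma Pskew_norm:
  fixes y :: "'a::{real_normed_field,banach}"
  assumes "norm y = 1"
  shows "norm (Pskew q a b y) = \<bar>wpr q (length a) (nth a) (nth b)\<bar>"
  unfolding Pskew_wpr norm_mult norm_power_int using assms by simp

lemma Pfun_bound:
  "\<exists>B. \<forall>x::nat \<Rightarrow> 'a::{real_normed_field,banach}. (\<forall>j. norm (x j) = 1) \<longrightarrow> norm (Pfun q lam x) \<le> B"
proof (intro exI allI impI)
  fix x :: "nat \<Rightarrow> 'a" assume x: "\<forall>j. norm (x j) = 1"
  have "norm (Pfun q lam x) \<le> (\<Sum>T\<in>GT (length lam) lam.
      norm (\<Prod>j<length lam. Pskew q (T!j) (if j = 0 then [] else T!(j-1)) (x j)))"
    unfolding Pfun_def by (rule norm_sum)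
  also have "\<dots> = (\<Sum>T\<in>GT (length lam) lam. \<Prod>j<length lam.
      \<bar>wpr q (length (T!j)) (nth (T!j)) (nth (if j = 0 then [] else T!(j-1)))\<bar>)"
    using x by (simp add: prod_norm[symmetric] Pskew_norm)
  finally show "norm (Pfun q lam x) \<le> (\<Sum>T\<in>GT (length lam) lam. \<Prod>j<length lam.
      \<bar>wpr q (length (T!j)) (nth (T!j)) (nth (if j = 0 then [] else T!(j-1)))\<bar>)" .
qed

definition InvF :: "real \<Rightarrow> nat \<Rightarrow> (nat \<Rightarrow> real) \<Rightarrow> (nat \<Rightarrow> complex) \<Rightarrow> complex" where
  "InvF q N alpha z = (\<Prod>i<N. \<Prod>j<N. inverse (qpinf q (of_real (alpha i) / z j)))"

definition SS :: "nat \<Rightarrow> (nat \<Rightarrow> complex) \<Rightarrow> complex" where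
  "SS N z = (\<Sum>j<N. z j)"

lemma PiF_split: "PiF q N z alpha t = InvF q N alpha z * exp (SS N z * of_real t)"
  unfolding PiF_def InvF_def SS_def by (simp add: sum_distrib_right exp_sum)

lemma InvF_bound:
  assumes q: "0 < q" "q < 1" and al: "\<forall>i<N. 0 \<le> alpha i \<and> alpha i < 1" and z: "\<forall>j. norm (z j) = 1"
  shows "norm (InvF q N alpha z) \<le> (\<Prod>i<N. \<Prod>j<N. 1 / qpinf q (alpha i))"
  unfolding InvF_def prod_norm[symmetric]
proof (intro prod_mono conjI norm_ge_zero)
  fix i j assume i: "i \<in> {..<N}"
  have nw: "norm (of_real (alpha i) / z j) = alpha i" using z al i by (simp add: norm_divide)
  have lo: "qpinf q (alpha i) \<le> norm (qpinf q (of_real (alpha i) / z j))" "qpinf q (alpha i) > 0"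
    using qpinf_norm_lower[OF q, of "of_real (alpha i) / z j"] nw al i by auto
  have "inverse (norm (qpinf q (of_real (alpha i) / z j))) \<le> inverse (qpinf q (alpha i))"
    by (rule le_imp_inverse_le) (use lo in auto)
  then show "norm (inverse (qpinf q (of_real (alpha i) / z j))) \<le> 1 / qpinf q (alpha i)"
    by (simp add: norm_inverse inverse_eq_divide norm_divide)
qed (auto intro: prod_nonneg)

lemma mq_bound:
  assumes q: "0 < q" "q < 1" and z: "\<forall>j. norm (z j) = 1"
  shows "norm (mq q N z) \<le> norm (1 / ((2 * of_real pi * \<i>) ^ N * of_nat (fact N) :: complex))
     * (\<Prod>i<N. \<Prod>j\<in>{i+1..<N}. exp (1 / (1 - q)) * exp (1 / (1 - q)))"
proof -
  have pb: "norm (\<Prod>i<N. \<Prod>j\<in>{i+1..<N}. qpinf q (z i / z j) * qpinf q (z j / z i))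
     \<le> (\<Prod>i<N. \<Prod>j\<in>{i+1..<N}. exp (1 / (1 - q)) * exp (1 / (1 - q)))"
    unfolding prod_norm[symmetric]
  proof (intro prod_mono conjI norm_ge_zero)
    fix i j
    have n1: "norm (z i / z j) = 1" "norm (z j / z i) = 1" using z by (simp_all add: norm_divide)
    show "norm (qpinf q (z i / z j) * qpinf q (z j / z i)) \<le> exp (1 / (1 - q)) * exp (1 / (1 - q))"
      unfolding norm_mult
      using qpinf_norm_upper[of q "z i / z j"] qpinf_norm_upper[of q "z j / z i"] q n1
      by (intro mult_mono) auto
  qed (auto intro: prod_nonneg)
  show ?thesis unfolding mq_def norm_mult by (rule mult_left_mono[OF pb norm_ge_zero])
qed

lemma InvF_meas:
  assumes q: "\<bar>q\<bar> < 1" and zm: "\<And>j. j < N \<Longrightarrow> (\<lambda>th. z th j) \<in> borel_measurable M"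
  shows "(\<lambda>th. InvF q N alpha (z th)) \<in> borel_measurable M"
  unfolding InvF_def
  by (intro borel_measurable_prod borel_measurable_inverse borel_measurable_qpinf[OF q]
       borel_measurable_divide borel_measurable_const zm) auto

lemma mq_meas:
  assumes q: "\<bar>q\<bar> < 1" and zm: "\<And>j. j < N \<Longrightarrow> (\<lambda>th. z th j) \<in> borel_measurable M"
  shows "(\<lambda>th. mq q N (z th)) \<in> borel_measurable M"
  unfolding mq_def
  by (intro borel_measurable_times borel_measurable_prod borel_measurable_qpinf[OF q]
       borel_measurable_divide borel_measurable_const zm) auto

lemma SS_meas:
  assumes zm: "\<And>j. j < N \<Longrightarrow> (\<lambda>th. z th j) \<in> borel_measurable M"
  shows "(\<lambda>th. SS N (z th)) \<in> borel_measurable M"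
  unfolding SS_def by (intro borel_measurable_sum zm) auto

lemma SS_bound: "\<forall>j. norm (z j) = 1 \<Longrightarrow> norm (SS N z) \<le> real N"
proof -
  assume z: "\<forall>j. norm (z j) = 1"
  have "norm (SS N z) \<le> (\<Sum>j<N. norm (z j))" unfolding SS_def by (rule norm_sum)
  also have "\<dots> = real N" using z by simp
  finally show ?thesis .
qed




lemma prod_split2:
  assumes "finite I" "a \<in> I \<Longrightarrow> b \<in> I \<Longrightarrow> a \<noteq> b"
  shows "prod g I = prod g (I - {a, b}) * (if a \<in> I then g a else 1) * (if b \<in> I then g b else 1)"
proof -
  have r: "\<And>J x. finite J \<Longrightarrow> x \<in> J \<Longrightarrow> prod g J = g x * prod g (J - {x})" by (rule prod.remove)
  consider "a \<in> I" "b \<in> I" | "a \<in> I" "b \<notin> I" | "a \<notin> I" "b \<in> I" | "a \<notin> I" "b \<notin> I" by blast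
  then show ?thesis
  proof cases
    case 1
    have "prod g I = g a * prod g (I - {a})" using r[OF assms(1) 1(1)] .
    also have "prod g (I - {a}) = g b * prod g (I - {a} - {b})"
      using r[of "I - {a}" b] assms 1 by auto
    also have "I - {a} - {b} = I - {a, b}" by auto
    finally show ?thesis using 1 by (simp add: mult_ac)
  next
    case 2
    have "I - {a, b} = I - {a}" using 2 by auto
    then show ?thesis using r[OF assms(1) 2(1)] 2 by (simp add: mult_ac)
  next
    case 3
    have "I - {a, b} = I - {b}" using 3 by auto
    then show ?thesis using r[OF assms(1) 3(2)] 3 by (simp add: mult_ac)
  next
    case 4
    have "I - {a, b} = I" using 4 by auto
    then show ?thesis using 4 by simp
  qed
qed

lemma prod_adjust:
  fixes f f' :: "nat \<Rightarrow> real"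
  assumes fin: "finite I" and eq: "\<And>i. i \<in> I \<Longrightarrow> i \<noteq> a \<Longrightarrow> i \<noteq> b \<Longrightarrow> f' i = f i"
    and ca: "a \<in> I \<Longrightarrow> c * f' a = f a" and ca': "a \<notin> I \<Longrightarrow> c = 1"
    and eb: "b \<in> I \<Longrightarrow> f' b = e * f b" and eb': "b \<notin> I \<Longrightarrow> e = 1"
    and ab: "a \<in> I \<Longrightarrow> b \<in> I \<Longrightarrow> a \<noteq> b"
  shows "c * prod f' I = e * prod f I"
proof -
  have J: "prod f' (I - {a, b}) = prod f (I - {a, b})" using eq by (intro prod.cong) auto
  have A: "c * (if a \<in> I then f' a else 1) = (if a \<in> I then f a else 1)" using ca ca' by auto
  have B: "(if b \<in> I then f' b else 1) = e * (if b \<in> I then f b else 1)" using eb eb' by auto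
  have S: "prod f' I = prod f' (I - {a, b}) * (if a \<in> I then f' a else 1) * (if b \<in> I then f' b else 1)"
    using prod_split2[of I a b f'] fin ab by blast
  have "c * prod f' I = prod f' (I - {a, b}) * (c * (if a \<in> I then f' a else 1)) * (if b \<in> I then f' b else 1)"
    unfolding S by algebra
  also have "\<dots> = e * (prod f (I - {a, b}) * (if a \<in> I then f a else 1) * (if b \<in> I then f b else 1))"
    unfolding J A B by (simp add: mult_ac)
  also have "\<dots> = e * prod f I" using prod_split2[of I a b f] fin ab by simp
  finally show ?thesis .
qed

definition pref :: "real \<Rightarrow> int list \<Rightarrow> real" where
  "pref q lam = (\<Prod>i<length lam - 1. qpinf q (q powi (lam!i - lam!(i+1) + 1)))"

lemma pref_rel:
  assumes q: "0 < q" "q < 1" and l: "l \<in> {1..length lam}"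
  shows "(if l = 1 then 1 else 1 - q powi (lam!(l-2) - lam!(l-1) + 1)) * pref q (lam[l-1 := lam!(l-1) - 1])
       = ee q (length lam) (nth lam) l * pref q lam"
proof -
  define N where "N = length lam"
  define lam' where "lam' = lam[l-1 := lam!(l-1) - 1]"
  define f where "f = (\<lambda>i. qpinf q (q powi (lam!i - lam!(i+1) + 1)))"
  define f' where "f' = (\<lambda>i. qpinf q (q powi (lam'!i - lam'!(i+1) + 1)))"
  define a where "a = (if 2 \<le> l then l - 2 else N)"
  define b where "b = l - 1"
  have aq: "\<bar>q\<bar> < 1" using q by simp
  have qn: "q \<noteq> 0" using q by simp
  have lN: "l - 1 < N" using l by (auto simp: N_def)
  have len': "length lam' = N" by (simp add: lam'_def N_def)
  have nth': "\<And>i. lam'!i = (if i = l - 1 then lam!(l-1) - 1 else lam!i)"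
    using lN by (auto simp: lam'_def N_def nth_list_update)
  have "(if l = 1 then 1 else 1 - q powi (lam!(l-2) - lam!(l-1) + 1)) * prod f' {..<N-1}
      = ee q N (nth lam) l * prod f {..<N-1}"
  proof (rule prod_adjust)
    show "finite {..<N-1}" by simp
  next
    fix i assume i: "i \<in> {..<N-1}" "i \<noteq> a" "i \<noteq> b"
    then have "i \<noteq> l - 1" "Suc i \<noteq> l - 1" using l by (auto simp: a_def b_def split: if_splits)
    then show "f' i = f i" by (simp add: f'_def f_def nth')
  next
    assume a: "a \<in> {..<N-1}"
    then have l2: "2 \<le> l" by (auto simp: a_def split: if_splits)
    then have e: "a = l - 2" "Suc (l - 2) = l - 1" "l \<noteq> 1" by (auto simp: a_def)
    define d where "d = lam!(l-2) - lam!(l-1)"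
    have pw: "q powi (d + 1) * q = q powi (d + 2)"
      using power_int_add_1[of q "d + 1"] qn by (simp add: add.assoc)
    have "f' a = qpinf q (q powi (d + 2))"
      unfolding f'_def e(1) using e by (simp add: nth' d_def algebra_simps)
    then have f'a: "f' a = qpinf q (q powi (d + 1) * q)" unfolding pw .
    have fa: "f a = qpinf q (q powi (d + 1))" unfolding f_def e(1) using e by (simp add: d_def algebra_simps)
    show "(if l = 1 then 1 else 1 - q powi (lam!(l-2) - lam!(l-1) + 1)) * f' a = f a"
      unfolding f'a fa using qpinf_shift[OF aq, of "q powi (d + 1)"] e by (simp add: d_def)
  next
    assume "a \<notin> {..<N-1}"
    then have "\<not> 2 \<le> l \<or> N - 1 \<le> l - 2" by (auto simp: a_def split: if_splits)
    then have "l = 1" using l lN by (auto simp: N_def)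
    then show "(if l = 1 then 1 else 1 - q powi (lam!(l-2) - lam!(l-1) + 1)) = 1" by simp
  next
    assume bI: "b \<in> {..<N-1}"
    then have lt: "l < N" "Suc (l - 1) = l" using l by (auto simp: b_def)
    define e where "e = lam!(l-1) - lam!l"
    have f'b: "f' b = qpinf q (q powi e)" unfolding f'_def b_def using lt by (simp add: nth' e_def)
    have fb: "f b = qpinf q (q powi e * q)" unfolding f_def b_def using lt qn by (simp add: e_def power_int_add_1)
    show "f' b = ee q N (nth lam) l * f b"
      unfolding f'b fb using qpinf_shift[OF aq, of "q powi e"] lt by (simp add: ee_def e_def)
  next
    assume "b \<notin> {..<N-1}"
    then have "l = N" using l lN by (auto simp: b_def N_def)
    then show "ee q N (nth lam) l = 1" by (simp add: ee_def)
  next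
    assume "a \<in> {..<N-1}" "b \<in> {..<N-1}"
    then show "a \<noteq> b" by (auto simp: a_def b_def split: if_splits)
  qed
  then show ?thesis unfolding pref_def f_def f'_def lam'_def N_def by (simp add: len'[unfolded lam'_def N_def])
qed




lemma GG_meas:
  assumes q: "0 < q" "q < 1" and len: "length lam' = N"
  shows "(\<lambda>th. Pfun q lam' (\<lambda>j. 1 / zz th j) * InvF q N alpha (zz th) * mq q N (zz th)) \<in> borel_measurable (PM N)"
proof -
  have aq: "\<bar>q\<bar> < 1" using q by simp
  show ?thesis
    by (intro borel_measurable_times Pfun_meas InvF_meas[OF aq] mq_meas[OF aq] borel_measurable_divide
        borel_measurable_const zz_meas) (auto simp: len)
qed

lemma GG_bound:
  assumes q: "0 < q" "q < 1" and al: "\<forall>i<N. 0 \<le> alpha i \<and> alpha i < 1"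
  shows "\<exists>B. \<forall>th. norm (Pfun q lam' (\<lambda>j. 1 / zz th j) * InvF q N alpha (zz th) * mq q N (zz th)) \<le> B"
proof -
  obtain BP where BP: "\<And>x::nat \<Rightarrow> complex. (\<forall>j. norm (x j) = 1) \<Longrightarrow> norm (Pfun q lam' x) \<le> BP"
    using Pfun_bound[of q lam'] by auto
  define BI where "BI = (\<Prod>i<N. \<Prod>j<N. 1 / qpinf q (alpha i))"
  define BM where "BM = norm (1 / ((2 * of_real pi * \<i>) ^ N * of_nat (fact N) :: complex))
     * (\<Prod>i<N. \<Prod>j\<in>{i+1..<N}. exp (1 / (1 - q)) * exp (1 / (1 - q)))"
  have n1: "\<And>th. \<forall>j. norm (1 / zz th j) = 1" by (simp add: norm_divide zz_norm)
  have n2: "\<And>th. \<forall>j. norm (zz th j) = 1" by (simp add: zz_norm)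
  show ?thesis
  proof (intro exI allI)
    fix th
    have bp: "norm (Pfun q lam' (\<lambda>j. 1 / zz th j)) \<le> BP" using BP[OF n1[of th]] .
    have bi: "norm (InvF q N alpha (zz th)) \<le> BI" unfolding BI_def by (rule InvF_bound[OF q al n2])
    have bm: "norm (mq q N (zz th)) \<le> BM" unfolding BM_def by (rule mq_bound[OF q n2])
    have z1: "0 \<le> BP" "0 \<le> BI" using bp bi order_trans[OF norm_ge_zero] by blast+
    have "norm (Pfun q lam' (\<lambda>j. 1 / zz th j) * InvF q N alpha (zz th) * mq q N (zz th))
       = norm (Pfun q lam' (\<lambda>j. 1 / zz th j)) * norm (InvF q N alpha (zz th)) * norm (mq q N (zz th))"
      by (simp add: norm_mult)
    also have "\<dots> \<le> BP * BI * BM"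
      using bp bi bm z1 by (intro mult_mono mult_nonneg_nonneg) (auto intro: order_trans[OF norm_ge_zero])
    finally show "norm (Pfun q lam' (\<lambda>j. 1 / zz th j) * InvF q N alpha (zz th) * mq q N (zz th)) \<le> BP * BI * BM" .
  qed
qed

lemma part2:
  assumes q: "0 < q" "q < 1" and sig: "is_sig lam" and al: "\<forall>i<length lam. 0 \<le> alpha i \<and> alpha i < 1"
  shows "((\<lambda>s. Qfun q lam alpha s) has_vector_derivative
         (\<Sum>l=1..length lam.
            of_real (if l = 1 then 1 else 1 - q powi (lam!(l-2) - lam!(l-1) + 1))
            * Qfun q (lam[l-1 := lam!(l-1) - 1]) alpha t)) (at t)"
proof -
  define N where "N = length lam"
  have al': "\<forall>i<N. 0 \<le> alpha i \<and> alpha i < 1" using al by (simp add: N_def)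
  define GG where "GG = (\<lambda>lam' th. Pfun q lam' (\<lambda>j. 1 / zz th j) * InvF q N alpha (zz th) * mq q N (zz th))"
  define S where "S = (\<lambda>th. SS N (zz th))"
  define I where "I = (\<lambda>lam' s. \<integral>th. GG lam' th * exp (S th * of_real s) \<partial>PM N)"
  have mGG: "\<And>lam'. length lam' = N \<Longrightarrow> GG lam' \<in> borel_measurable (PM N)"
    unfolding GG_def by (rule GG_meas[OF q])
  have bGG: "\<And>lam'. \<exists>B. \<forall>th. norm (GG lam' th) \<le> B"
    unfolding GG_def by (rule GG_bound[OF q al'])
  have mS: "S \<in> borel_measurable (PM N)" unfolding S_def by (intro SS_meas zz_meas)
  have bS: "\<And>th. norm (S th) \<le> real N" unfolding S_def by (intro SS_bound) (simp add: zz_norm)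
  have Qeq: "\<And>lam' s. length lam' = N \<Longrightarrow> is_sig lam' \<Longrightarrow>
      Qfun q lam' alpha s = of_real (pref q lam') * (\<i> ^ N * I lam' s)"
  proof -
    fix lam' s assume l': "length lam' = N" "is_sig lam'"
    have "\<And>th. Pfun q lam' (\<lambda>j. 1 / (\<lambda>j. exp (\<i> * of_real (th j))) j)
              * PiF q (length lam') (\<lambda>j. exp (\<i> * of_real (th j))) alpha s
              * mq q (length lam') (\<lambda>j. exp (\<i> * of_real (th j)))
           = GG lam' th * exp (S th * of_real s)"
      unfolding GG_def S_def PiF_split l'(1) zz_def by (simp add: mult_ac)
    then show "Qfun q lam' alpha s = of_real (pref q lam') * (\<i> ^ N * I lam' s)"
      unfolding Qfun_def torus_int_def I_def PM_def pref_def using l' by simp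
  qed
  obtain BG where BG: "\<And>th. norm (GG lam th) \<le> BG" using bGG[of lam] by auto
  have D: "((\<lambda>s. I lam s) has_vector_derivative (\<integral>th. GG lam th * S th * exp (S th * of_real t) \<partial>PM N)) (at t)"
    unfolding I_def by (rule deriv_integral_exp[OF PM_finite mGG[OF N_def[symmetric]] mS BG bS])
  have D2: "((\<lambda>s. Qfun q lam alpha s) has_vector_derivative
      of_real (pref q lam) * (\<i> ^ N * (\<integral>th. GG lam th * S th * exp (S th * of_real t) \<partial>PM N))) (at t)"
  proof -
    have "(\<lambda>s. Qfun q lam alpha s) = (\<lambda>s. of_real (pref q lam) * (\<i> ^ N * I lam s))"
      using Qeq[OF N_def[symmetric] sig] by auto
    then show ?thesis by (auto intro!: has_vector_derivative_mult_right D)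
  qed
  \<comment> \<open>Pieri under the integral\<close>
  have pt: "\<And>th. GG lam th * S th * exp (S th * of_real t)
      = (\<Sum>l=1..N. of_real (ee q N (nth lam) l) * (GG (lam[l-1 := lam!(l-1) - 1]) th * exp (S th * of_real t)))"
  proof -
    fix th
    have xnz: "\<forall>j. 1 / zz th j \<noteq> 0" by (simp add: zz_nz)
    have P: "(\<Sum>j<N. inverse (1 / zz th j)) * Pfun q lam (\<lambda>j. 1 / zz th j)
      = (\<Sum>l=1..N. of_real (ee q N (nth lam) l) * Pfun q (lam[l-1 := lam!(l-1) - 1]) (\<lambda>j. 1 / zz th j))"
      using pieri[OF q xnz, of N] sig N_def by auto
    have "(\<Sum>j<N. inverse (1 / zz th j)) = S th" by (simp add: S_def SS_def)
    then have P': "S th * Pfun q lam (\<lambda>j. 1 / zz th j)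
      = (\<Sum>l=1..N. of_real (ee q N (nth lam) l) * Pfun q (lam[l-1 := lam!(l-1) - 1]) (\<lambda>j. 1 / zz th j))"
      using P by simp
    have "GG lam th * S th * exp (S th * of_real t)
       = (S th * Pfun q lam (\<lambda>j. 1 / zz th j)) * (InvF q N alpha (zz th) * mq q N (zz th) * exp (S th * of_real t))"
      by (simp add: GG_def mult_ac)
    also have "\<dots> = (\<Sum>l=1..N. of_real (ee q N (nth lam) l) * (GG (lam[l-1 := lam!(l-1) - 1]) th * exp (S th * of_real t)))"
      unfolding P' sum_distrib_right by (simp add: GG_def mult_ac)
    finally show "?thesis th" .
  qed
  have intl: "\<And>l. integrable (PM N) (\<lambda>th. GG (lam[l-1 := lam!(l-1) - 1]) th * exp (S th * of_real t))"
  proof -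
    fix l
    interpret finite_measure "PM N" by (rule PM_finite)
    obtain B where B: "\<And>th. norm (GG (lam[l-1 := lam!(l-1) - 1]) th) \<le> B"
      using bGG[of "lam[l-1 := lam!(l-1) - 1]"] by auto
    show "integrable (PM N) (\<lambda>th. GG (lam[l-1 := lam!(l-1) - 1]) th * exp (S th * of_real t))"
    proof (rule integrable_const_bound[where B="B * exp (real N * \<bar>t\<bar>)"])
      show "AE x in PM N. norm (GG (lam[l-1 := lam!(l-1) - 1]) x * exp (S x * of_real t)) \<le> B * exp (real N * \<bar>t\<bar>)"
      proof (rule AE_I2)
        fix x
        have ne: "norm (exp (S x * of_real t)) \<le> exp (real N * \<bar>t\<bar>)"
        proof -
          have "norm (exp (S x * of_real t)) = exp (Re (S x * of_real t))" by (rule norm_exp_eq_Re)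
          also have "Re (S x * of_real t) \<le> norm (S x * of_real t)" by (rule complex_Re_le_cmod)
          also have "norm (S x * of_real t) \<le> real N * \<bar>t\<bar>" using bS[of x] by (simp add: norm_mult mult_right_mono)
          finally show ?thesis by simp
        qed
        have "norm (GG (lam[l-1 := lam!(l-1) - 1]) x * exp (S x * of_real t))
            = norm (GG (lam[l-1 := lam!(l-1) - 1]) x) * norm (exp (S x * of_real t))" by (rule norm_mult)
        also have "\<dots> \<le> B * exp (real N * \<bar>t\<bar>)"
          using B[of x] ne by (intro mult_mono) (auto intro: order_trans[OF norm_ge_zero])
        finally show "norm (GG (lam[l-1 := lam!(l-1) - 1]) x * exp (S x * of_real t)) \<le> B * exp (real N * \<bar>t\<bar>)" .
      qed
      have m1: "GG (lam[l-1 := lam!(l-1) - 1]) \<in> borel_measurable (PM N)" using mGG N_def by simp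
      show "(\<lambda>th. GG (lam[l-1 := lam!(l-1) - 1]) th * exp (S th * of_real t)) \<in> borel_measurable (PM N)"
        by (use m1 mS in measurable)
    qed
  qed
  have intD: "(\<integral>th. GG lam th * S th * exp (S th * of_real t) \<partial>PM N)
      = (\<Sum>l=1..N. of_real (ee q N (nth lam) l) * I (lam[l-1 := lam!(l-1) - 1]) t)"
  proof -
    have "(\<integral>th. GG lam th * S th * exp (S th * of_real t) \<partial>PM N)
      = (\<integral>th. (\<Sum>l=1..N. of_real (ee q N (nth lam) l) * (GG (lam[l-1 := lam!(l-1) - 1]) th * exp (S th * of_real t))) \<partial>PM N)"
      using pt by simp
    also have "\<dots> = (\<Sum>l=1..N. \<integral>th. of_real (ee q N (nth lam) l) * (GG (lam[l-1 := lam!(l-1) - 1]) th * exp (S th * of_real t)) \<partial>PM N)"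
      by (rule Bochner_Integration.integral_sum[where I="{1..N}" and f="\<lambda>l th. of_real (ee q N (nth lam) l) * (GG (lam[l-1 := lam!(l-1) - 1]) th * exp (S th * of_real t))"])
         (use intl in auto)
    also have "\<dots> = (\<Sum>l=1..N. of_real (ee q N (nth lam) l) * I (lam[l-1 := lam!(l-1) - 1]) t)"
      unfolding I_def by simp
    finally show ?thesis .
  qed
  have fin: "of_real (pref q lam) * (\<i> ^ N * (\<Sum>l=1..N. of_real (ee q N (nth lam) l) * I (lam[l-1 := lam!(l-1) - 1]) t))
     = (\<Sum>l=1..length lam.
            of_real (if l = 1 then 1 else 1 - q powi (lam!(l-2) - lam!(l-1) + 1))
            * Qfun q (lam[l-1 := lam!(l-1) - 1]) alpha t)"
    unfolding sum_distrib_left N_def[symmetric]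
  proof (rule sum.cong[OF refl])
    fix l assume l: "l \<in> {1..N}"
    show "of_real (pref q lam) * (\<i> ^ N * (of_real (ee q N (nth lam) l) * I (lam[l-1 := lam!(l-1) - 1]) t))
        = of_real (if l = 1 then 1 else 1 - q powi (lam!(l-2) - lam!(l-1) + 1))
            * Qfun q (lam[l-1 := lam!(l-1) - 1]) alpha t"
    proof (cases "ee q N (nth lam) l = 0")
      case True
      then have "\<not> is_sig (lam[l-1 := lam!(l-1) - 1]) \<or> True" by simp
      show ?thesis
      proof (cases "is_sig (lam[l-1 := lam!(l-1) - 1])")
        case False then show ?thesis using True by (simp add: Qfun_def)
      next
        case sig': True
        have "(if l = 1 then 1 else 1 - q powi (lam!(l-2) - lam!(l-1) + 1)) * pref q (lam[l-1 := lam!(l-1) - 1])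
           = ee q N (nth lam) l * pref q lam" using pref_rel[OF q, of l lam] l N_def by simp
        then have "(if l = 1 then 1 else 1 - q powi (lam!(l-2) - lam!(l-1) + 1)) * pref q (lam[l-1 := lam!(l-1) - 1]) = 0"
          using True by simp
        then show ?thesis using True Qeq[of "lam[l-1 := lam!(l-1) - 1]" t] sig' N_def
          by (simp del: of_real_mult add: of_real_mult[symmetric] mult.assoc[symmetric])
      qed
    next
      case False
      then have sig': "is_sig (lam[l-1 := lam!(l-1) - 1])" using sig_lower[OF sig, of l q] l N_def by simp
      have pr: "(if l = 1 then 1 else 1 - q powi (lam!(l-2) - lam!(l-1) + 1)) * pref q (lam[l-1 := lam!(l-1) - 1])
           = ee q N (nth lam) l * pref q lam" using pref_rel[OF q, of l lam] l N_def by simp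
      have "of_real (if l = 1 then 1 else 1 - q powi (lam!(l-2) - lam!(l-1) + 1))
            * Qfun q (lam[l-1 := lam!(l-1) - 1]) alpha t
          = of_real ((if l = 1 then 1 else 1 - q powi (lam!(l-2) - lam!(l-1) + 1)) * pref q (lam[l-1 := lam!(l-1) - 1]))
            * (\<i> ^ N * I (lam[l-1 := lam!(l-1) - 1]) t)"
        using Qeq[of "lam[l-1 := lam!(l-1) - 1]" t] sig' N_def by (simp add: mult.assoc)
      also have "\<dots> = of_real (pref q lam) * (\<i> ^ N * (of_real (ee q N (nth lam) l) * I (lam[l-1 := lam!(l-1) - 1]) t))"
        unfolding pr by (simp add: mult_ac)
      finally show ?thesis by simp
    qed
  qed
  show ?thesis using D2 unfolding intD fin .
qed



theorem mainTheorem8: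
  fixes q :: real
  assumes "0 < q" and "q < 1"
  shows
  "(\<forall>k lam mu (a::real). 1 \<le> k \<longrightarrow> length lam = k \<longrightarrow> is_sig lam \<longrightarrow>
      length mu = k - 1 \<longrightarrow> is_sig mu \<longrightarrow> 0 < a \<longrightarrow>
      (\<Sum>l=1..k. (if l = 1 then 1 else 1 - q powi (lam!(l-2) - lam!(l-1)))
                   * Pskew q (lam[l-1 := lam!(l-1) + 1]) mu a)
      = a * Pskew q lam mu a
        + (\<Sum>l=1..k-1. (if l = 1 then 1 else 1 - q powi (mu!(l-2) - mu!(l-1) + 1))
                   * Pskew q lam (mu[l-1 := mu!(l-1) - 1]) a))
   \<and>
   (\<forall>lam alpha (t::real). is_sig lam \<longrightarrow>
      (\<forall>i<length lam. 0 \<le> alpha i \<and> alpha i < 1) \<longrightarrow> 0 < t \<longrightarrow>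
      ((\<lambda>s. Qfun q lam alpha s) has_vector_derivative
         (\<Sum>l=1..length lam.
            of_real (if l = 1 then 1 else 1 - q powi (lam!(l-2) - lam!(l-1) + 1))
            * Qfun q (lam[l-1 := lam!(l-1) - 1]) alpha t)) (at t))"
proof (intro conjI allI impI)
  fix k lam mu and a :: real
  assume "1 \<le> k" "length lam = k" "is_sig lam" "length mu = k - 1" "is_sig mu" "0 < a"
  then show "(\<Sum>l=1..k. (if l = 1 then 1 else 1 - q powi (lam!(l-2) - lam!(l-1)))
                   * Pskew q (lam[l-1 := lam!(l-1) + 1]) mu a)
      = a * Pskew q lam mu a
        + (\<Sum>l=1..k-1. (if l = 1 then 1 else 1 - q powi (mu!(l-2) - mu!(l-1) + 1))
                   * Pskew q lam (mu[l-1 := mu!(l-1) - 1]) a)"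
    using part1[OF assms] by blast
next
  fix lam :: "int list" and alpha :: "nat \<Rightarrow> real" and t :: real
  assume "is_sig lam" "\<forall>i<length lam. 0 \<le> alpha i \<and> alpha i < 1" "0 < t"
  then show "((\<lambda>s. Qfun q lam alpha s) has_vector_derivative
         (\<Sum>l=1..length lam.
            of_real (if l = 1 then 1 else 1 - q powi (lam!(l-2) - lam!(l-1) + 1))
            * Qfun q (lam[l-1 := lam!(l-1) - 1]) alpha t)) (at t)"
    using part2[OF assms] by blast
qed

end
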